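(* Let $\lambda_-,\lambda_+$ be two bounded measured geodesic laminations on $\mathbb{H}^2$ that strongly fill, and fix $o\in\mathbb{H}^2$. For each $n>0$ there exists $\varepsilon_n>0$ with the following property. Let $F_-,F_+$ be leaves of $\lambda_-,\lambda_+$ respectively, each meeting the circle $C(o,n)$ of radius $n$ about $o$, with endpoints $a_-,a_+\in\partial_\infty\mathbb{H}^2$, and let $b_-,b_+$ be the first intersection points of $F_-,F_+$ with $C(o,n)$ when travelling from $a_-,a_+$ respectively. Then either the visual distance from $o$ between $a_-$ and $a_+$ is at least $\varepsilon_n$, or the visual distance from $o$ between $b_-$ and $b_+$ is at least $\varepsilon_n$.
   Context: A measured geodesic lamination on $\mathbb{H}^2$ is a closed union of disjoint complete geodesics with a transverse invariant measure of full support; $i(\gamma,\lambda)$ is the transverse measure of a geodesic segment $\gamma$. $\lambda$ is bounded if $i(\gamma,\lambda)\le C$ for all segments of length $1$. $\lambda,\mu$ strongly fill if for every $\varepsilon>0$ there is $c>0$ with $i(\gamma,\lambda)+i(\gamma,\mu)\ge\varepsilon$ for every geodesic segment of length $\ge c$. The visual distance from $o$ between two points of $\mathbb{H}^2\cup\partial_\infty\mathbb{H}^2$ is the angle at $o$ between the geodesic rays from $o$ to them. *)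

theory Defs
  imports "HOL-Analysis.Analysis"
begin

text \<open>Poincare disk model of the hyperbolic plane: H2 is the open unit disk in C,
  the circle at infinity is the unit circle.\<close>

definition hdisk :: "complex set" where
  "hdisk = ball 0 1"

definition hdist :: "complex \<Rightarrow> complex \<Rightarrow> real" where
  "hdist z w = arcosh (1 + 2 * (cmod (z - w))\<^sup>2 / ((1 - (cmod z)\<^sup>2) * (1 - (cmod w)\<^sup>2)))"

definition geodesic_line :: "(real \<Rightarrow> complex) \<Rightarrow> bool" where
  "geodesic_line \<gamma> \<longleftrightarrow> (\<forall>t. \<gamma> t \<in> hdisk) \<and> (\<forall>s t. hdist (\<gamma> s) (\<gamma> t) = \<bar>s - t\<bar>)"

definition geod :: "complex \<Rightarrow> complex \<Rightarrow> complex set" where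
  "geod p q = {z. \<exists>\<gamma>. geodesic_line \<gamma> \<and> (\<gamma> \<longlongrightarrow> p) at_bot \<and> (\<gamma> \<longlongrightarrow> q) at_top \<and> z \<in> range \<gamma>}"

text \<open>Unoriented geodesics are parametrised by pairs of distinct ideal points; each
  unoriented geodesic has exactly one representative in pos_pairs.\<close>
definition pos_pairs :: "(complex \<times> complex) set" where
  "pos_pairs = {(p, q). cmod p = 1 \<and> cmod q = 1 \<and> 0 < Arg (q / p)}"

definition msupp :: "'a::topological_space measure \<Rightarrow> 'a set" where
  "msupp M = {x. \<forall>U. open U \<and> x \<in> U \<longrightarrow> emeasure M U > 0}"

definition leaves :: "(complex \<times> complex) measure \<Rightarrow> complex set set" where
  "leaves M = {geod p q | p q. (p, q) \<in> msupp M \<inter> pos_pairs}"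

text \<open>A measured geodesic lamination, encoded by its transverse measure viewed as a
  measure on the space of geodesics (whose support consists of the leaves, giving full support).\<close>
definition measured_lamination :: "(complex \<times> complex) measure \<Rightarrow> bool" where
  "measured_lamination M \<longleftrightarrow>
     sets M = sets borel \<and>
     emeasure M (UNIV - pos_pairs) = 0 \<and>
     (\<forall>F\<in>leaves M. \<forall>G\<in>leaves M. F \<noteq> G \<longrightarrow> F \<inter> G = {}) \<and>
     (\<forall>z\<in>hdisk. z \<in> closure (\<Union>(leaves M)) \<longrightarrow> z \<in> \<Union>(leaves M)) \<and>
     (\<forall>K. compact K \<and> K \<subseteq> hdisk \<longrightarrow>
        emeasure M {(p, q) \<in> pos_pairs. geod p q \<inter> K \<noteq> {}} < \<infinity>)"

definition hseg :: "complex \<Rightarrow> complex \<Rightarrow> complex set" where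
  "hseg x y = {z \<in> hdisk. hdist x z + hdist z y = hdist x y}"

definition inum :: "complex set \<Rightarrow> (complex \<times> complex) measure \<Rightarrow> ennreal" where
  "inum \<sigma> M = emeasure M {(p, q) \<in> pos_pairs. geod p q \<inter> \<sigma> \<noteq> {} \<and> \<not> \<sigma> \<subseteq> geod p q}"

definition bounded_lam :: "(complex \<times> complex) measure \<Rightarrow> bool" where
  "bounded_lam M \<longleftrightarrow> (\<exists>C::real. \<forall>x\<in>hdisk. \<forall>y\<in>hdisk.
      hdist x y = 1 \<longrightarrow> inum (hseg x y) M \<le> ennreal C)"

definition strongly_fill :: "(complex \<times> complex) measure \<Rightarrow> (complex \<times> complex) measure \<Rightarrow> bool" where
  "strongly_fill M N \<longleftrightarrow> (\<forall>\<epsilon>>0. \<exists>c>0. \<forall>x\<in>hdisk. \<forall>y\<in>hdisk.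
      hdist x y \<ge> c \<longrightarrow> inum (hseg x y) M + inum (hseg x y) N \<ge> ennreal \<epsilon>)"

definition geod_ray :: "complex \<Rightarrow> complex \<Rightarrow> (real \<Rightarrow> complex) \<Rightarrow> bool" where
  "geod_ray ob x \<rho> \<longleftrightarrow> \<rho> 0 = ob \<and> (\<forall>t\<ge>0. \<rho> t \<in> hdisk) \<and>
     (\<forall>s\<ge>0. \<forall>t\<ge>0. hdist (\<rho> s) (\<rho> t) = \<bar>s - t\<bar>) \<and>
     (x \<in> \<rho> ` {0..} \<or> (\<rho> \<longlongrightarrow> x) at_top)"

text \<open>Euclidean angle between two nonzero vectors; the disk model is conformal, so the angle
  between tangent vectors at o is the hyperbolic angle.\<close>
definition vec_angle :: "complex \<Rightarrow> complex \<Rightarrow> real" where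
  "vec_angle u v = arccos (Re (u * cnj v) / (cmod u * cmod v))"

definition visual_dist :: "complex \<Rightarrow> complex \<Rightarrow> complex \<Rightarrow> real" where
  "visual_dist ob x y = (THE \<theta>. \<exists>\<rho>1 \<rho>2 u v. geod_ray ob x \<rho>1 \<and> geod_ray ob y \<rho>2 \<and>
      (\<rho>1 has_vector_derivative u) (at 0 within {0..}) \<and>
      (\<rho>2 has_vector_derivative v) (at 0 within {0..}) \<and> \<theta> = vec_angle u v)"

definition first_hit :: "complex \<Rightarrow> real \<Rightarrow> (real \<Rightarrow> complex) \<Rightarrow> real \<Rightarrow> bool" where
  "first_hit ob r \<gamma> t \<longleftrightarrow> hdist ob (\<gamma> t) = r \<and> (\<forall>s<t. hdist ob (\<gamma> s) \<noteq> r)"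

end

theory Submission
  imports Defs
begin


definition mob :: "complex \<Rightarrow> complex \<Rightarrow> complex" where
  "mob c z = (z - c) / (1 - cnj c * z)"

definition th :: "real \<Rightarrow> real" where "th t = tanh (t/2)"

definition hQ :: "complex \<Rightarrow> complex \<Rightarrow> real" where
  "hQ z w = 1 + 2 * (cmod (z - w))\<^sup>2 / ((1 - (cmod z)\<^sup>2) * (1 - (cmod w)\<^sup>2))"

lemma hdist_hQ: "hdist z w = arcosh (hQ z w)"
  by (simp add: hdist_def hQ_def)

lemma key_id: "(cmod (1 - cnj c * z))\<^sup>2 - (cmod (z - c))\<^sup>2 = (1 - (cmod c)\<^sup>2) * (1 - (cmod z)\<^sup>2)"
  by (simp only: cmod_power2) (simp add: algebra_simps power2_eq_square)

lemma denom_nz: "cmod c < 1 \<Longrightarrow> cmod z \<le> 1 \<Longrightarrow> 1 - cnj c * z \<noteq> 0"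
proof
  assume "cmod c < 1" "cmod z \<le> 1" "1 - cnj c * z = 0"
  then have "cnj c * z = 1" by simp
  then have "cmod c * cmod z = 1" by (metis complex_mod_cnj norm_mult norm_one)
  moreover have "cmod c * cmod z < 1"
    using \<open>cmod c < 1\<close> \<open>cmod z \<le> 1\<close>
    by (metis abs_ge_zero less_le_trans mult_le_cancel_left2 norm_mult_less norm_one order.strict_implies_order real_norm_def linorder_not_less mult_left_le_one_le norm_ge_zero mult.commute)
  ultimately show False by simp
qed

lemma mob_norm_sq:
  assumes "cmod c < 1" "cmod z \<le> 1"
  shows "1 - (cmod (mob c z))\<^sup>2 = (1 - (cmod c)\<^sup>2) * (1 - (cmod z)\<^sup>2) / (cmod (1 - cnj c * z))\<^sup>2"
proof -
  have nz: "cmod (1 - cnj c * z) \<noteq> 0" using denom_nz[OF assms] by simp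
  have "(cmod (mob c z))\<^sup>2 = (cmod (z - c))\<^sup>2 / (cmod (1 - cnj c * z))\<^sup>2"
    by (simp add: mob_def norm_divide power_divide)
  then show ?thesis using key_id[of c z] nz by (simp add: field_simps)
qed

lemma mob_diff:
  assumes "cmod c < 1" "cmod z \<le> 1" "cmod w \<le> 1"
  shows "mob c z - mob c w = (1 - c * cnj c) * (z - w) / ((1 - cnj c * z) * (1 - cnj c * w))"
proof -
  have "1 - cnj c * z \<noteq> 0" "1 - cnj c * w \<noteq> 0" using denom_nz assms by auto
  then show ?thesis unfolding mob_def by (simp add: field_simps)
qed

lemma cmod_1_minus_cc: "cmod c < 1 \<Longrightarrow> cmod (1 - c * cnj c) = 1 - (cmod c)\<^sup>2"
proof -
  assume a: "cmod c < 1"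
  have "1 - c * cnj c = complex_of_real (1 - (cmod c)\<^sup>2)"
    using complex_norm_square[of c] by simp
  moreover have "1 - (cmod c)\<^sup>2 \<ge> 0" using a
    using power_le_one[of "cmod c" 2] by simp
  ultimately show ?thesis by (metis norm_of_real abs_of_nonneg)
qed

lemma mob_diff_norm_sq:
  assumes "cmod c < 1" "cmod z \<le> 1" "cmod w \<le> 1"
  shows "(cmod (mob c z - mob c w))\<^sup>2 = (1 - (cmod c)\<^sup>2)\<^sup>2 * (cmod (z - w))\<^sup>2
     / ((cmod (1 - cnj c * z))\<^sup>2 * (cmod (1 - cnj c * w))\<^sup>2)"
  using assms by (simp add: mob_diff norm_divide norm_mult cmod_1_minus_cc power_divide power_mult_distrib)

lemma hQ_mob:
  assumes "cmod c < 1" "cmod z < 1" "cmod w < 1"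
  shows "hQ (mob c z) (mob c w) = hQ z w"
proof -
  have nz: "cmod (1 - cnj c * z) \<noteq> 0" "cmod (1 - cnj c * w) \<noteq> 0" using denom_nz assms by auto
  have p: "1 - (cmod c)\<^sup>2 > 0" "1 - (cmod z)\<^sup>2 > 0" "1 - (cmod w)\<^sup>2 > 0" using assms
    by (simp_all add: abs_square_less_1)
  have alg: "\<And>A X Dz Dw Pz Pw::real. A \<noteq> 0 \<Longrightarrow> Dz \<noteq> 0 \<Longrightarrow> Dw \<noteq> 0 \<Longrightarrow> Pz \<noteq> 0 \<Longrightarrow> Pw \<noteq> 0 \<Longrightarrow>
     2 * (A\<^sup>2 * X / (Dz * Dw)) / ((A * Pz / Dz) * (A * Pw / Dw)) = 2 * X / (Pz * Pw)"
    by (simp add: divide_simps power2_eq_square)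
  have e1: "1 - (cmod (mob c z))\<^sup>2 = (1 - (cmod c)\<^sup>2) * (1 - (cmod z)\<^sup>2) / (cmod (1 - cnj c * z))\<^sup>2"
    using assms by (intro mob_norm_sq) auto
  have e2: "1 - (cmod (mob c w))\<^sup>2 = (1 - (cmod c)\<^sup>2) * (1 - (cmod w)\<^sup>2) / (cmod (1 - cnj c * w))\<^sup>2"
    using assms by (intro mob_norm_sq) auto
  have e3: "(cmod (mob c z - mob c w))\<^sup>2 = (1 - (cmod c)\<^sup>2)\<^sup>2 * (cmod (z - w))\<^sup>2
     / ((cmod (1 - cnj c * z))\<^sup>2 * (cmod (1 - cnj c * w))\<^sup>2)"
    using assms by (intro mob_diff_norm_sq) auto
  show ?thesis unfolding hQ_def e1 e2 e3
    by (subst alg) (use nz p in auto)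
qed

lemma mob_in_disk:
  assumes "cmod c < 1" "cmod z < 1" shows "cmod (mob c z) < 1"
proof -
  have nz: "cmod (1 - cnj c * z) \<noteq> 0" using denom_nz assms by auto
  have p: "1 - (cmod c)\<^sup>2 > 0" "1 - (cmod z)\<^sup>2 > 0" using assms
    by (simp_all add: abs_square_less_1)
  have "1 - (cmod (mob c z))\<^sup>2 > 0" using mob_norm_sq[of c z] assms nz p by simp
  then show ?thesis by (simp add: abs_square_less_1)
qed

lemma mob_on_circle:
  assumes "cmod c < 1" "cmod z = 1" shows "cmod (mob c z) = 1"
proof -
  have nz: "cmod (1 - cnj c * z) \<noteq> 0" using denom_nz assms by auto
  have "1 - (cmod (mob c z))\<^sup>2 = 0" using mob_norm_sq[of c z] assms nz by simp
  then show ?thesis using norm_ge_zero[of "mob c z"] by (auto simp: power2_eq_1_iff)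
qed

lemma mob_inv:
  assumes "cmod c < 1" "cmod z \<le> 1" shows "mob (-c) (mob c z) = z"
proof -
  have nz: "1 - cnj c * z \<noteq> 0" using denom_nz assms by auto
  have "1 - c * cnj c \<noteq> 0" using cmod_1_minus_cc[of c] assms
    by (metis abs_norm_cancel abs_square_less_1 less_irrefl diff_gt_0_iff_gt norm_zero)
  note h = this
  have a: "mob c z + c = z*(1 - c*cnj c)/(1 - cnj c * z)" using nz unfolding mob_def
    by (simp add: field_simps)
  have b: "1 + cnj c * mob c z = (1 - c * cnj c)/(1 - cnj c*z)" using nz unfolding mob_def
    by (simp add: field_simps)
  have "mob (-c) (mob c z) = (mob c z + c) / (1 + cnj c * mob c z)" by (simp add: mob_def)
  also have "\<dots> = z" unfolding a b
  proof -
    have g: "\<And>x y d::complex. y \<noteq> 0 \<Longrightarrow> d \<noteq> 0 \<Longrightarrow> x*y/d/(y/d) = x" by simp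
    show "z * (1 - c * cnj c) / (1 - cnj c * z) / ((1 - c * cnj c) / (1 - cnj c * z)) = z"
      by (rule g) (use h nz in auto)
  qed
  finally show ?thesis .
qed

lemma hdist_mob:
  assumes "cmod c < 1" "cmod z < 1" "cmod w < 1"
  shows "hdist (mob c z) (mob c w) = hdist z w"
  using hQ_mob[OF assms] by (simp add: hdist_hQ)


lemma rl1: assumes "0 \<le> (r::real)" "r < 1" shows "(1 + r^2)/(1 - r^2) + 2*r/(1 - r^2) = (1+r)/(1-r)"
proof -
  have e: "1 - r^2 = (1-r)*(1+r)" by (simp add: algebra_simps power2_eq_square)
  have "1 - r \<noteq> 0" "1 + r \<noteq> 0" using assms by auto
  then show ?thesis unfolding e by (simp add: divide_simps) (simp add: algebra_simps power2_eq_square)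
qed
lemma rl2: assumes "0 \<le> (r::real)" "r < 1" shows "((1+r)/(1-r) - inverse ((1+r)/(1-r))) / 2 = 2*r/(1 - r^2)"
proof -
  have e: "1 - r^2 = (1-r)*(1+r)" by (simp add: algebra_simps power2_eq_square)
  have "1 - r \<noteq> 0" "1 + r \<noteq> 0" using assms by auto
  then show ?thesis unfolding e by (simp add: divide_simps) (simp add: algebra_simps power2_eq_square)
qed
lemma rl3: assumes "0 \<le> (r::real)" "r < 1" shows "(2*r/(1 - r^2))^2 = ((1 + r^2)/(1 - r^2))^2 - 1"
proof -
  have e: "1 - r^2 = (1-r)*(1+r)" by (simp add: algebra_simps power2_eq_square)
  have "1 - r \<noteq> 0" "1 + r \<noteq> 0" using assms by auto
  then show ?thesis unfolding e by (simp add: divide_simps) (simp add: algebra_simps power2_eq_square)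
qed
lemma rl4: assumes "(a::real) < 1" shows "1 + 2 * a / (1 * (1 - a)) = (1 + a) / (1 - a)"
proof -
  have "1 - a \<noteq> 0" using assms by auto
  then show ?thesis by (simp add: divide_simps) 
qed

lemma rl5: assumes "(a::real) < 1" "(b::real) < 1"
  shows "(1 + b)/(1 - b) * ((1 + a)/(1 - a)) - 2 * s / (1 - b) * (2 * r / (1 - a)) = ((1 + a)*(1 + b) - 4 * (r * s))/((1-a)*(1-b))"
     and "(1 + b)/(1 - b) * ((1 + a)/(1 - a)) + 2 * s / (1 - b) * (2 * r / (1 - a)) = ((1 + a)*(1 + b) + 4 * (r * s))/((1-a)*(1-b))"
proof -
  have "1 - a \<noteq> 0" "1 - b \<noteq> 0" using assms by auto
  then show "(1 + b)/(1 - b) * ((1 + a)/(1 - a)) - 2 * s / (1 - b) * (2 * r / (1 - a)) = ((1 + a)*(1 + b) - 4 * (r * s))/((1-a)*(1-b))"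
     and "(1 + b)/(1 - b) * ((1 + a)/(1 - a)) + 2 * s / (1 - b) * (2 * r / (1 - a)) = ((1 + a)*(1 + b) + 4 * (r * s))/((1-a)*(1-b))"
    by (simp_all only: times_divide_times_eq diff_divide_distrib[symmetric] add_divide_distrib[symmetric]) (simp_all add: algebra_simps)
qed

lemma sq_lt1: "cmod z < 1 \<Longrightarrow> 1 - (cmod z)\<^sup>2 > 0"
  by (simp add: abs_square_less_1)

lemma cmod_diff_sq: "(cmod (z - w))\<^sup>2 = (cmod z)\<^sup>2 + (cmod w)\<^sup>2 - 2 * Re (z * cnj w)"
  by (simp only: cmod_power2) (simp add: algebra_simps power2_eq_square)

lemma hQ_expand:
  assumes "cmod z < 1" "cmod w < 1"
  shows "hQ z w = ((1 + (cmod z)\<^sup>2) * (1 + (cmod w)\<^sup>2) - 4 * Re (z * cnj w)) / ((1 - (cmod z)\<^sup>2) * (1 - (cmod w)\<^sup>2))"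
proof -
  have g: "\<And>a b \<rho>::real. a < 1 \<Longrightarrow> b < 1 \<Longrightarrow>
     1 + 2 * (a + b - 2 * \<rho>) / ((1 - a) * (1 - b)) = ((1 + a) * (1 + b) - 4 * \<rho>) / ((1 - a) * (1 - b))"
  proof -
    fix a b \<rho> :: real assume ab: "a < 1" "b < 1"
    have nz: "(1-a)*(1-b) \<noteq> 0" using ab by simp
    show "1 + 2 * (a + b - 2 * \<rho>) / ((1 - a) * (1 - b)) = ((1 + a) * (1 + b) - 4 * \<rho>) / ((1 - a) * (1 - b))"
      by (subst add_divide_eq_iff[OF nz]) (simp add: algebra_simps)
  qed
  show ?thesis unfolding hQ_def cmod_diff_sq
    by (rule g) (use sq_lt1[OF assms(1)] sq_lt1[OF assms(2)] in auto)
qed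

lemma hQ_ge1:
  assumes "cmod z < 1" "cmod w < 1" shows "hQ z w \<ge> 1"
  using sq_lt1[OF assms(1)] sq_lt1[OF assms(2)] unfolding hQ_def by simp

lemma cosh_hdist: "cmod z < 1 \<Longrightarrow> cmod w < 1 \<Longrightarrow> cosh (hdist z w) = hQ z w"
  using hQ_ge1 by (simp add: hdist_hQ)

lemma hdist_nonneg: "cmod z < 1 \<Longrightarrow> cmod w < 1 \<Longrightarrow> hdist z w \<ge> 0"
  using hQ_ge1 by (simp add: hdist_hQ)

lemma hdist_sym: "hdist z w = hdist w z"
  unfolding hdist_def by (simp add: norm_minus_commute mult.commute)

lemma hdist_self: "hdist z z = 0"
  unfolding hdist_def by simp

lemma hdist_eq0: "cmod z < 1 \<Longrightarrow> cmod w < 1 \<Longrightarrow> hdist z w = 0 \<Longrightarrow> z = w"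
  using hQ_ge1[of z w] sq_lt1[of z] sq_lt1[of w] unfolding hdist_hQ
  by (simp add: hQ_def)

lemma hdist_0:
  assumes "cmod z < 1"
  shows "hdist 0 z = ln ((1 + cmod z) / (1 - cmod z))"
proof -
  let ?r = "cmod z"
  have r: "0 \<le> ?r" "?r < 1" using assms by auto
  have nz: "1 - ?r\<^sup>2 \<noteq> 0" using sq_lt1[OF assms] by simp
  have x: "hQ 0 z = (1 + ?r\<^sup>2) / (1 - ?r\<^sup>2)" unfolding hQ_def
    using rl4[of "?r\<^sup>2"] sq_lt1[OF assms] by simp
  have x1: "(1 + ?r\<^sup>2) / (1 - ?r\<^sup>2) \<ge> 1" using sq_lt1[OF assms] by (simp add: le_divide_eq)
  have s: "sqrt (((1 + ?r\<^sup>2) / (1 - ?r\<^sup>2))\<^sup>2 - 1) = 2 * ?r / (1 - ?r\<^sup>2)"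
  proof (rule real_sqrt_unique)
    show "(2 * ?r / (1 - ?r\<^sup>2))\<^sup>2 = ((1 + ?r\<^sup>2) / (1 - ?r\<^sup>2))\<^sup>2 - 1"
      by (rule rl3[OF r])
    show "0 \<le> 2 * ?r / (1 - ?r\<^sup>2)" using r sq_lt1[OF assms] by simp
  qed
  have "(1 + ?r\<^sup>2) / (1 - ?r\<^sup>2) + 2 * ?r / (1 - ?r\<^sup>2) = (1 + ?r) / (1 - ?r)" using r
    by (rule rl1)
  moreover have "0 < (1 + ?r) / (1 - ?r)"
  proof -
    have "0 < 1 + ?r" "0 < 1 - ?r" using r by linarith+
    then show ?thesis by (rule divide_pos_pos)
  qed
  ultimately show ?thesis unfolding hdist_hQ x arcosh_real_def[OF x1] s by simp
qed

lemma exp_hdist_0: "cmod z < 1 \<Longrightarrow> exp (hdist 0 z) = (1 + cmod z) / (1 - cmod z)"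
proof -
  assume a: "cmod z < 1"
  have "0 < 1 + cmod z" "0 < 1 - cmod z" using a norm_ge_zero[of z] by linarith+
  then have "0 < (1 + cmod z) / (1 - cmod z)" by (rule divide_pos_pos)
  then show ?thesis by (simp add: hdist_0[OF a])
qed

lemma cosh_hdist_0: "cmod z < 1 \<Longrightarrow> cosh (hdist 0 z) = (1 + (cmod z)\<^sup>2) / (1 - (cmod z)\<^sup>2)"
  using hQ_ge1[of 0 z] rl4[of "(cmod z)\<^sup>2"] sq_lt1[of z] by (simp add: hdist_hQ hQ_def)

lemma sinh_hdist_0: "cmod z < 1 \<Longrightarrow> sinh (hdist 0 z) = 2 * cmod z / (1 - (cmod z)\<^sup>2)"
proof -
  assume a: "cmod z < 1"
  let ?r = "cmod z"
  have r: "0 \<le> ?r" "?r < 1" using a by auto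
  have "sinh (hdist 0 z) = ((1 + ?r) / (1 - ?r) - inverse ((1 + ?r) / (1 - ?r))) / 2"
  proof -
    have "0 < 1 + ?r" "0 < 1 - ?r" using r by linarith+
    then have "0 < (1 + ?r) / (1 - ?r)" by (rule divide_pos_pos)
    then show ?thesis unfolding hdist_0[OF a] by (rule sinh_ln_real)
  qed
  also have "\<dots> = 2 * ?r / (1 - ?r\<^sup>2)" using r by (rule rl2)
  finally show ?thesis .
qed

lemma same_dir:
  assumes "w \<noteq> 0" "Re (z * cnj w) = cmod z * cmod w"
  shows "z = of_real (cmod z / cmod w) * w"
proof -
  define k where "k = cmod z / cmod w"
  have k: "k * cmod w = cmod z" "k \<ge> 0" using assms by (auto simp: k_def)
  have r1: "Re (z * cnj (of_real k * w)) = k * Re (z * cnj w)" by (simp add: algebra_simps)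
  have r2: "cmod (of_real k * w) = k * cmod w" using k(2) by (simp add: norm_mult)
  have "(cmod (z - of_real k * w))\<^sup>2 = (cmod z)\<^sup>2 + (k * cmod w)\<^sup>2 - 2 * (k * Re (z * cnj w))"
    unfolding cmod_diff_sq r1 r2 ..
  also have "\<dots> = 0" unfolding k(1) assms(2) by (simp add: power2_eq_square k(1)[symmetric])
  finally have "(cmod (z - of_real (cmod z / cmod w) * w))\<^sup>2 = 0" unfolding k_def .
  then show ?thesis by simp
qed

lemma opp_dir:
  assumes "w \<noteq> 0" "Re (z * cnj w) = - (cmod z * cmod w)"
  shows "z = - of_real (cmod z / cmod w) * w"
proof -
  define k where "k = cmod z / cmod w"
  have k: "k * cmod w = cmod z" "k \<ge> 0" using assms by (auto simp: k_def)
  have r1: "Re (z * cnj (- of_real k * w)) = - k * Re (z * cnj w)" by (simp add: algebra_simps)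
  have r2: "cmod (- of_real k * w) = k * cmod w" using k(2) by (simp add: norm_mult)
  have "(cmod (z - (- of_real k * w)))\<^sup>2 = (cmod z)\<^sup>2 + (k * cmod w)\<^sup>2 - 2 * (- k * Re (z * cnj w))"
    unfolding cmod_diff_sq r1 r2 ..
  also have "\<dots> = 0" unfolding k(1) assms(2) by (simp add: power2_eq_square k(1)[symmetric])
  finally have "(cmod (z - (- of_real (cmod z / cmod w) * w)))\<^sup>2 = 0" unfolding k_def .
  then show ?thesis by (metis right_minus_eq norm_eq_zero power_eq_0_iff)
qed

lemma collinear_0:
  assumes z: "cmod z < 1" and w: "cmod w < 1" and e: "hdist 0 z + hdist z w = hdist 0 w"
  shows "Re (z * cnj w) = cmod z * cmod w"
proof -
  let ?r = "cmod z" and ?s = "cmod w"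
  have "hdist z w = hdist 0 w - hdist 0 z" using e by simp
  then have "hQ z w = cosh (hdist 0 w) * cosh (hdist 0 z) - sinh (hdist 0 w) * sinh (hdist 0 z)"
    using cosh_hdist[OF z w] by (simp add: cosh_diff)
  also have "\<dots> = ((1 + ?r\<^sup>2) * (1 + ?s\<^sup>2) - 4 * (?r * ?s)) / ((1 - ?r\<^sup>2) * (1 - ?s\<^sup>2))"
    unfolding cosh_hdist_0[OF z] cosh_hdist_0[OF w] sinh_hdist_0[OF z] sinh_hdist_0[OF w]
    by (rule rl5(1)) (use sq_lt1[OF z] sq_lt1[OF w] in auto)
  finally have "((1 + ?r\<^sup>2) * (1 + ?s\<^sup>2) - 4 * Re (z * cnj w)) = ((1 + ?r\<^sup>2) * (1 + ?s\<^sup>2) - 4 * (?r * ?s))"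
    unfolding hQ_expand[OF z w] divide_cancel_right using sq_lt1[OF z] sq_lt1[OF w] by auto
  then show ?thesis by simp
qed

lemma anticollinear_0:
  assumes z: "cmod z < 1" and w: "cmod w < 1" and e: "hdist z 0 + hdist 0 w = hdist z w"
  shows "Re (z * cnj w) = - (cmod z * cmod w)"
proof -
  let ?r = "cmod z" and ?s = "cmod w"
  have "hdist z w = hdist 0 w + hdist 0 z" using e hdist_sym[of z 0] by simp
  then have "hQ z w = cosh (hdist 0 w) * cosh (hdist 0 z) + sinh (hdist 0 w) * sinh (hdist 0 z)"
    using cosh_hdist[OF z w] by (simp add: cosh_add)
  also have "\<dots> = ((1 + ?r\<^sup>2) * (1 + ?s\<^sup>2) + 4 * (?r * ?s)) / ((1 - ?r\<^sup>2) * (1 - ?s\<^sup>2))"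
    unfolding cosh_hdist_0[OF z] cosh_hdist_0[OF w] sinh_hdist_0[OF z] sinh_hdist_0[OF w]
    by (rule rl5(2)) (use sq_lt1[OF z] sq_lt1[OF w] in auto)
  finally have "((1 + ?r\<^sup>2) * (1 + ?s\<^sup>2) - 4 * Re (z * cnj w)) = ((1 + ?r\<^sup>2) * (1 + ?s\<^sup>2) + 4 * (?r * ?s))"
    unfolding hQ_expand[OF z w] divide_cancel_right using sq_lt1[OF z] sq_lt1[OF w] by auto
  then show ?thesis by simp
qed


lemma th_bounds: "\<bar>th t\<bar> < 1"
  unfolding th_def using tanh_real_bounds[of "t/2"] by auto

lemma th_minus: "th (-t) = - th t" by (simp add: th_def)
lemma th_0 [simp]: "th 0 = 0" by (simp add: th_def)
lemma th_abs: "\<bar>th t\<bar> = th \<bar>t\<bar>"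
  unfolding th_def using tanh_real_abs[of "t/2"] by simp
lemma th_pos: "t > 0 \<Longrightarrow> th t > 0" by (simp add: th_def)
lemma th_nonneg: "t \<ge> 0 \<Longrightarrow> th t \<ge> 0" by (simp add: th_def)

lemma th_ratio: "(1 + th t) / (1 - th t) = exp t"
proof -
  have e: "exp (-t) > 0" by simp
  have "th t = (1 - exp (-t)) / (1 + exp (-t))" unfolding th_def tanh_real_altdef by simp
  then have "(1 + th t) / (1 - th t) = 1 / exp (-t)" using e th_bounds[of t]
    by (simp add: divide_simps) (simp add: algebra_simps)
  then show ?thesis by (simp add: exp_minus inverse_eq_divide)
qed

lemma ln_ratio_inj:
  assumes "0 \<le> (r::real)" "r < 1" "0 \<le> q" "q < 1"
    and "ln ((1 + r) / (1 - r)) = ln ((1 + q) / (1 - q))"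
  shows "r = q"
proof -
  have "(1 + r) / (1 - r) = (1 + q) / (1 - q)"
    using assms by (subst (asm) ln_inj_iff) (auto intro!: divide_pos_pos)
  then have "(1 + r) * (1 - q) = (1 + q) * (1 - r)" using assms by (simp add: divide_simps)
  then show ?thesis by (simp add: algebra_simps)
qed

lemma norm_th_u: "cmod u = 1 \<Longrightarrow> cmod (of_real (th t) * u) = th \<bar>t\<bar>"
  by (simp add: norm_mult th_abs)

lemma th_in_disk: "cmod u = 1 \<Longrightarrow> cmod (of_real (th t) * u) < 1"
  using th_bounds[of t] by (simp add: norm_mult)

lemma hdist_0_th: "cmod u = 1 \<Longrightarrow> hdist 0 (of_real (th t) * u) = \<bar>t\<bar>"
  using hdist_0[OF th_in_disk, of u t] by (simp add: norm_th_u th_ratio)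

lemma hdist_0_norm:
  assumes "cmod z < 1" "hdist 0 z = t" shows "cmod z = th t"
proof -
  have t: "t \<ge> 0" using hdist_nonneg[of 0 z] assms by simp
  have "hdist 0 (of_real (th t) * 1) = t" using hdist_0_th[of 1 t] t by simp
  then have "ln ((1 + th t) / (1 - th t)) = t" using th_ratio by simp
  moreover have "ln ((1 + cmod z) / (1 - cmod z)) = t" using hdist_0[OF assms(1)] assms(2) by simp
  ultimately show ?thesis using ln_ratio_inj[of "cmod z" "th t"] assms th_bounds[of t] th_nonneg[OF t]
    by auto
qed

lemma mob_th:
  assumes "cmod u = 1"
  shows "mob (of_real (th s) * u) (of_real (th t) * u) = of_real (th (t - s)) * u"
proof -
  have uu: "cnj u * u = 1" using assms by (metis complex_norm_square mult.commute of_real_1 power_one)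
  have "\<bar>th s\<bar> * \<bar>th t\<bar> < 1 * 1"
    by (rule mult_strict_mono') (use th_bounds in auto)
  then have d: "1 - th s * th t \<noteq> 0"
    using abs_ge_self[of "th s * th t"] by (auto simp: abs_mult)
  have "th (t - s) = (th t - th s) / (1 - th t * th s)"
    unfolding th_def using tanh_add[of "t/2" "-(s/2)"] by (simp add: diff_divide_distrib)
  moreover have "mob (of_real (th s) * u) (of_real (th t) * u) = of_real ((th t - th s) / (1 - th s * th t)) * u"
  proof -
    have num: "of_real (th t) * u - of_real (th s) * u = of_real (th t - th s) * u"
      by (simp add: algebra_simps)
    have "cnj (of_real (th s) * u) * (of_real (th t) * u) = of_real (th s * th t) * (cnj u * u)"
      by (simp add: algebra_simps)
    then have den: "1 - cnj (of_real (th s) * u) * (of_real (th t) * u) = of_real (1 - th s * th t)"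
      by (simp add: uu)
    show ?thesis unfolding mob_def num den by simp
  qed
  ultimately show ?thesis by (simp add: mult.commute)
qed

lemma hdist_th:
  assumes "cmod u = 1"
  shows "hdist (of_real (th s) * u) (of_real (th t) * u) = \<bar>s - t\<bar>"
proof -
  let ?c = "of_real (th s) * u"
  have "hdist ?c (of_real (th t) * u) = hdist (mob ?c ?c) (mob ?c (of_real (th t) * u))"
    using hdist_mob th_in_disk[OF assms] by metis
  also have "\<dots> = hdist 0 (of_real (th (t - s)) * u)"
    using mob_th[OF assms, of s s] mob_th[OF assms, of s t] by simp
  also have "\<dots> = \<bar>s - t\<bar>" using hdist_0_th[OF assms] by simp
  finally show ?thesis .
qed

lemma geodesic_line_std: "cmod u = 1 \<Longrightarrow> geodesic_line (\<lambda>t. of_real (th t) * u)"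
  unfolding geodesic_line_def hdisk_def using th_in_disk hdist_th by auto

lemma geodesic_line_mob:
  assumes "cmod c < 1" "geodesic_line \<gamma>" shows "geodesic_line (\<lambda>t. mob c (\<gamma> t))"
  using assms unfolding geodesic_line_def hdisk_def
  by (auto simp: mob_in_disk hdist_mob)


lemma mob_self [simp]: "mob c c = 0" by (simp add: mob_def)

lemma mob_0 [simp]: "mob c 0 = - c" by (simp add: mob_def)

lemma th_norm_eq_1:
  assumes "cmod u = 1" "cmod v = 1" "of_real (th 1) * v = of_real (th t) * u"
  shows "v = u \<or> v = - u"
proof -
  have "th 1 = th \<bar>t\<bar>" using arg_cong[OF assms(3), of cmod] norm_th_u[OF assms(1), of t] norm_th_u[OF assms(2), of 1] by simp
  then have "\<bar>t\<bar> = 1" using tanh_real_eq_iff unfolding th_def by (metis divide_cancel_right zero_neq_numeral)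
  then have "t = 1 \<or> t = -1" by auto
  moreover have "th 1 \<noteq> 0" using th_pos[of 1] by simp
  moreover have "th (-1) = - th 1" by (rule th_minus)
  ultimately show ?thesis using assms(3)
    by (metis minus_mult_commute mult_cancel_left of_real_eq_0_iff of_real_minus)
qed

lemma ray_class:
  assumes r0: "\<rho> 0 = 0" and rd: "\<forall>t\<ge>0. cmod (\<rho> t) < 1"
    and ri: "\<forall>s\<ge>0. \<forall>t\<ge>0. hdist (\<rho> s) (\<rho> t) = \<bar>s - t\<bar>"
  shows "\<exists>u. cmod u = 1 \<and> (\<forall>t\<ge>0. \<rho> t = of_real (th t) * u)"
proof -
  have nrm: "cmod (\<rho> t) = th t" if "t \<ge> 0" for t
  proof -
    have "hdist 0 (\<rho> t) = t" using ri[rule_format, of 0 t] r0 that by simp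
    then show ?thesis using hdist_0_norm[of "\<rho> t" t] rd that by simp
  qed
  have t1: "th 1 > 0" by (rule th_pos) simp
  define u where "u = \<rho> 1 / of_real (th 1)"
  have u1: "cmod u = 1" unfolding u_def using nrm[of 1] t1 by (simp add: norm_divide)
  have r1: "\<rho> 1 = of_real (th 1) * u" unfolding u_def using t1 by simp
  have "\<rho> t = of_real (th t) * u" if t: "t \<ge> 0" for t
  proof (cases "t \<le> 1")
    case True
    have "hdist 0 (\<rho> t) + hdist (\<rho> t) (\<rho> 1) = hdist 0 (\<rho> 1)"
      using ri[rule_format, of 0 t] ri[rule_format, of t 1] ri[rule_format, of 0 1] r0 t True by simp
    then have "Re (\<rho> t * cnj (\<rho> 1)) = cmod (\<rho> t) * cmod (\<rho> 1)"
      using collinear_0 rd t by simp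
    then have "\<rho> t = of_real (cmod (\<rho> t) / cmod (\<rho> 1)) * \<rho> 1"
      by (rule same_dir[rotated]) (use nrm[of 1] t1 in auto)
    then show ?thesis unfolding nrm[OF t] nrm[of 1, simplified] r1 using t1 u1 by (simp add: norm_mult)
  next
    case False
    have "hdist 0 (\<rho> 1) + hdist (\<rho> 1) (\<rho> t) = hdist 0 (\<rho> t)"
      using ri[rule_format, of 0 t] ri[rule_format, of 1 t] ri[rule_format, of 0 1] r0 t False by simp
    then have "Re (\<rho> 1 * cnj (\<rho> t)) = cmod (\<rho> 1) * cmod (\<rho> t)"
      using collinear_0 rd t by simp
    then have "\<rho> 1 = of_real (cmod (\<rho> 1) / cmod (\<rho> t)) * \<rho> t"
      by (rule same_dir[rotated]) (use nrm[OF t] th_pos[of t] False in auto)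
    then have "of_real (th 1) * u = of_real (th 1 / th t) * \<rho> t"
      unfolding nrm[OF t] nrm[of 1, simplified] r1 using u1 t1 by (simp add: norm_mult)
    then show ?thesis using t1 th_pos[of t] False by (simp add: field_simps)
  qed
  then show ?thesis using u1 by blast
qed

lemma line_class0:
  assumes g: "geodesic_line \<gamma>" and g0: "\<gamma> 0 = 0"
  shows "\<exists>u. cmod u = 1 \<and> (\<forall>t. \<gamma> t = of_real (th t) * u)"
proof -
  have gd: "\<And>t. cmod (\<gamma> t) < 1" and gi: "\<And>s t. hdist (\<gamma> s) (\<gamma> t) = \<bar>s - t\<bar>"
    using g unfolding geodesic_line_def hdisk_def by auto
  obtain u where u: "cmod u = 1" "\<forall>t\<ge>0. \<gamma> t = of_real (th t) * u"
    using ray_class[of \<gamma>] g0 gd gi by blast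
  obtain v where v: "cmod v = 1" "\<forall>t\<ge>0. \<gamma> (-t) = of_real (th t) * v"
    using ray_class[of "\<lambda>t. \<gamma> (-t)"] g0 gd gi by (auto simp: abs_minus_commute)
  have "hdist (\<gamma> (-1)) 0 + hdist 0 (\<gamma> 1) = hdist (\<gamma> (-1)) (\<gamma> 1)"
    using gi[of "-1" 0] gi[of 0 1] gi[of "-1" 1] g0 by simp
  then have "Re (\<gamma> (-1) * cnj (\<gamma> 1)) = - (cmod (\<gamma> (-1)) * cmod (\<gamma> 1))"
    using anticollinear_0 gd by blast
  then have "\<gamma> (-1) = - of_real (cmod (\<gamma> (-1)) / cmod (\<gamma> 1)) * \<gamma> 1"
    by (rule opp_dir[rotated]) (use u th_pos[of 1] in \<open>auto simp: norm_mult\<close>)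
  then have "of_real (th 1) * v = - of_real (th 1) * u"
    using u v th_pos[of 1] by (auto simp: norm_mult)
  then have "of_real (th 1) * (v + u) = 0" by (simp add: algebra_simps)
  then have "v + u = 0" using th_pos[of 1] by simp
  then have vu: "v = - u" by (simp add: eq_neg_iff_add_eq_0)
  have "\<gamma> t = of_real (th t) * u" for t
  proof (cases "t \<ge> 0")
    case True then show ?thesis using u by auto
  next
    case False
    then have "\<gamma> (- (-t)) = of_real (th (-t)) * v" using v(2)[rule_format, of "-t"] by simp
    then show ?thesis using vu by (simp add: th_minus)
  qed
  then show ?thesis using u by blast
qed

lemma line_class:
  assumes g: "geodesic_line \<gamma>"
  shows "\<exists>u. cmod u = 1 \<and> (\<forall>t. mob (\<gamma> 0) (\<gamma> t) = of_real (th t) * u)"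
proof -
  have c: "cmod (\<gamma> 0) < 1" using g unfolding geodesic_line_def hdisk_def by auto
  show ?thesis using line_class0[OF geodesic_line_mob[OF c g]] by simp
qed

lemma line_class':
  assumes g: "geodesic_line \<gamma>"
  obtains u where "cmod u = 1" "\<And>t. \<gamma> t = mob (- \<gamma> 0) (of_real (th t) * u)"
    "\<And>t. mob (\<gamma> 0) (\<gamma> t) = of_real (th t) * u"
proof -
  have c: "cmod (\<gamma> 0) < 1" and gd: "\<And>t. cmod (\<gamma> t) < 1" using g unfolding geodesic_line_def hdisk_def by auto
  obtain u where u: "cmod u = 1" "\<And>t. mob (\<gamma> 0) (\<gamma> t) = of_real (th t) * u"
    using line_class[OF g] by blast
  have "\<gamma> t = mob (- \<gamma> 0) (of_real (th t) * u)" for t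
    using mob_inv[OF c, of "\<gamma> t"] gd[of t] u(2)[of t] by simp
  then show ?thesis using that u by blast
qed


lemma isCont_mob: "cmod c < 1 \<Longrightarrow> cmod z \<le> 1 \<Longrightarrow> isCont (mob c) z"
  unfolding mob_def[abs_def] using denom_nz[of c z] by (intro continuous_intros) auto

lemma th_tends_top: "((\<lambda>t. of_real (th t) * u) \<longlongrightarrow> (u::complex)) at_top"
proof -
  have "filterlim (\<lambda>t::real. t / 2) at_top at_top"
    by (intro filterlim_tendsto_pos_mult_at_top[of "\<lambda>_. 1/2" "1/2" at_top "\<lambda>t. t", simplified])
       (auto simp: filterlim_ident)
  then have "((\<lambda>t. tanh (t/2)) \<longlongrightarrow> (1::real)) at_top"
    using tanh_real_at_top filterlim_compose by blast
  from tendsto_mult_right[OF tendsto_of_real[OF this], of u]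
  show ?thesis unfolding th_def by simp
qed

lemma th_tends_bot: "((\<lambda>t. of_real (th t) * u) \<longlongrightarrow> - (u::complex)) at_bot"
proof -
  have "((\<lambda>t. of_real (th t) * (- u)) \<longlongrightarrow> - u) at_top" by (rule th_tends_top)
  then have "((\<lambda>t. of_real (th (- t)) * (- u)) \<longlongrightarrow> - u) at_bot"
    by (simp add: filterlim_at_top_mirror)
  then show ?thesis by (simp add: th_minus)
qed

lemma filterlim_add_const_top: "filterlim (\<lambda>x::real. x + s) at_top at_top"
  unfolding filterlim_at_top eventually_at_top_linorder
proof
  fix Z show "\<exists>N. \<forall>x\<ge>N. Z \<le> x + s" by (rule exI[of _ "Z - s"]) auto
qed

lemma geodesic_shift: "geodesic_line \<gamma> \<Longrightarrow> geodesic_line (\<lambda>t. \<gamma> (t + s))"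
  unfolding geodesic_line_def by auto

lemma geodesic_rev: "geodesic_line \<gamma> \<Longrightarrow> geodesic_line (\<lambda>t. \<gamma> (- t))"
  unfolding geodesic_line_def by (auto simp: abs_minus_commute)

lemma shift_top: "((\<gamma>::real\<Rightarrow>complex) \<longlongrightarrow> a) at_top \<Longrightarrow> ((\<lambda>t. \<gamma> (t + s)) \<longlongrightarrow> a) at_top"
  by (rule filterlim_compose[of \<gamma>, OF _ filterlim_add_const_top])

lemma shift_bot: "((\<gamma>::real\<Rightarrow>complex) \<longlongrightarrow> a) at_bot \<Longrightarrow> ((\<lambda>t. \<gamma> (t + s)) \<longlongrightarrow> a) at_bot"
proof -
  assume "(\<gamma> \<longlongrightarrow> a) at_bot"
  then have "((\<lambda>t. \<gamma> (- t)) \<longlongrightarrow> a) at_top" by (simp add: filterlim_at_bot_mirror)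
  then have "((\<lambda>t. \<gamma> (- (t - s))) \<longlongrightarrow> a) at_top" using shift_top[of "\<lambda>t. \<gamma> (- t)" a "-s"] by simp
  then show ?thesis by (simp add: filterlim_at_bot_mirror)
qed

lemma rev_top: "((\<gamma>::real\<Rightarrow>complex) \<longlongrightarrow> a) at_bot \<Longrightarrow> ((\<lambda>t. \<gamma> (- t)) \<longlongrightarrow> a) at_top"
  by (simp add: filterlim_at_bot_mirror)

lemma rev_bot: "((\<gamma>::real\<Rightarrow>complex) \<longlongrightarrow> a) at_top \<Longrightarrow> ((\<lambda>t. \<gamma> (- t)) \<longlongrightarrow> a) at_bot"
  by (simp add: filterlim_at_top_mirror)

lemma line_limits:
  assumes g: "geodesic_line \<gamma>" and u: "cmod u = 1" and e: "\<And>t. \<gamma> t = mob (- \<gamma> 0) (of_real (th t) * u)"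
  shows "(\<gamma> \<longlongrightarrow> mob (- \<gamma> 0) u) at_top" "(\<gamma> \<longlongrightarrow> mob (- \<gamma> 0) (- u)) at_bot"
proof -
  have c: "cmod (- \<gamma> 0) < 1" using g unfolding geodesic_line_def hdisk_def by auto
  have eq: "(\<lambda>t. mob (- \<gamma> 0) (of_real (th t) * u)) = \<gamma>" by (rule ext, rule e[symmetric])
  have "((\<lambda>t. mob (- \<gamma> 0) (of_real (th t) * u)) \<longlongrightarrow> mob (- \<gamma> 0) u) at_top"
    by (rule isCont_tendsto_compose[OF isCont_mob[OF c] th_tends_top]) (use u in simp)
  then show "(\<gamma> \<longlongrightarrow> mob (- \<gamma> 0) u) at_top" by (simp only: eq)
  have "((\<lambda>t. mob (- \<gamma> 0) (of_real (th t) * u)) \<longlongrightarrow> mob (- \<gamma> 0) (- u)) at_bot"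
    by (rule isCont_tendsto_compose[OF isCont_mob[OF c] th_tends_bot]) (use u in simp)
  then show "(\<gamma> \<longlongrightarrow> mob (- \<gamma> 0) (- u)) at_bot" by (simp only: eq)
qed

lemma endpoints_of_line:
  assumes g: "geodesic_line \<gamma>" and p: "(\<gamma> \<longlongrightarrow> p) at_bot" and q: "(\<gamma> \<longlongrightarrow> q) at_top"
  obtains u where "cmod u = 1" "\<And>t. \<gamma> t = mob (- \<gamma> 0) (of_real (th t) * u)"
    "\<And>t. mob (\<gamma> 0) (\<gamma> t) = of_real (th t) * u"
    "p = mob (- \<gamma> 0) (- u)" "q = mob (- \<gamma> 0) u"
proof -
  obtain u where u: "cmod u = 1" "\<And>t. \<gamma> t = mob (- \<gamma> 0) (of_real (th t) * u)"
    "\<And>t. mob (\<gamma> 0) (\<gamma> t) = of_real (th t) * u"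
    using line_class'[OF g] by blast
  have "p = mob (- \<gamma> 0) (- u)" using tendsto_unique[OF _ p line_limits(2)[OF g u(1,2)]] by simp
  moreover have "q = mob (- \<gamma> 0) u" using tendsto_unique[OF _ q line_limits(1)[OF g u(1,2)]] by simp
  ultimately show ?thesis using that u by blast
qed

lemma mob_inv': "cmod c < 1 \<Longrightarrow> cmod z \<le> 1 \<Longrightarrow> mob c (mob (- c) z) = z"
  using mob_inv[of "-c" z] by simp

lemma endpoint_opp:
  assumes g: "geodesic_line \<eta>" and p: "(\<eta> \<longlongrightarrow> P) at_bot" and q: "(\<eta> \<longlongrightarrow> Q) at_top"
  shows "mob (\<eta> s) P = - mob (\<eta> s) Q \<and> cmod (mob (\<eta> s) Q) = 1"
proof -
  let ?e = "\<lambda>t. \<eta> (t + s)"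
  have g': "geodesic_line ?e" by (rule geodesic_shift[OF g])
  obtain u where u: "cmod u = 1" "P = mob (- ?e 0) (- u)" "Q = mob (- ?e 0) u"
    using endpoints_of_line[OF g' shift_bot[OF p] shift_top[OF q]] by blast
  have c: "cmod (\<eta> s) < 1" using g unfolding geodesic_line_def hdisk_def by auto
  have e0: "?e 0 = \<eta> s" by simp
  have P1: "mob (\<eta> s) P = mob (\<eta> s) (mob (- \<eta> s) (- u))" using u(2) e0 by simp
  have P2: "mob (\<eta> s) (mob (- \<eta> s) (- u)) = - u" by (rule mob_inv'[OF c]) (use u in simp)
  have Q1: "mob (\<eta> s) Q = mob (\<eta> s) (mob (- \<eta> s) u)" using u(3) e0 by simp
  have Q2: "mob (\<eta> s) (mob (- \<eta> s) u) = u" by (rule mob_inv'[OF c]) (use u in simp)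
  show ?thesis unfolding P1 P2 Q1 Q2 using u(1) by simp
qed

lemma tanh_artanh_real: "\<bar>a::real\<bar> < 1 \<Longrightarrow> th (2 * artanh a) = a"
proof -
  assume a: "\<bar>a\<bar> < 1"
  have p: "0 < 1 + a" "0 < 1 - a" using a by auto
  have "- 2 * (2 * artanh a / 2) = - ln ((1 + a) / (1 - a))" by (simp add: artanh_def)
  then have "exp (- 2 * (2 * artanh a / 2)) = inverse ((1 + a) / (1 - a))"
    using p by (simp add: exp_minus)
  then have "exp (- 2 * (2 * artanh a / 2)) = (1 - a) / (1 + a)" by simp
  moreover have "(1 - (1 - a) / (1 + a)) / (1 + (1 - a) / (1 + a)) = a"
  proof -
    have n: "1 - (1 - a) / (1 + a) = 2 * a / (1 + a)" using p by (simp add: field_simps)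
    have d: "1 + (1 - a) / (1 + a) = 2 / (1 + a)" using p by (simp add: field_simps)
    show ?thesis unfolding n d using p by simp
  qed
  ultimately show ?thesis unfolding th_def tanh_real_altdef by simp
qed


lemma in_disk: "geodesic_line \<gamma> \<Longrightarrow> cmod (\<gamma> t) < 1"
  unfolding geodesic_line_def hdisk_def by auto

lemma same_range_endpoints:
  assumes gg: "geodesic_line \<gamma>" and gd: "geodesic_line \<delta>" and sub: "range \<delta> \<subseteq> range \<gamma>"
    and dp: "(\<delta> \<longlongrightarrow> p) at_bot" and dq: "(\<delta> \<longlongrightarrow> q) at_top"
    and ga: "(\<gamma> \<longlongrightarrow> a) at_bot" and gb: "(\<gamma> \<longlongrightarrow> b) at_top"
  shows "(p = a \<and> q = b) \<or> (p = b \<and> q = a)"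
proof -
  obtain s0 where s0: "\<delta> 0 = \<gamma> s0" using sub by auto
  define g' where "g' = (\<lambda>t. \<gamma> (t + s0))"
  have g': "geodesic_line g'" unfolding g'_def by (rule geodesic_shift[OF gg])
  have g'0: "g' 0 = \<delta> 0" unfolding g'_def using s0 by simp
  obtain w where w: "cmod w = 1" "\<And>t. mob (g' 0) (g' t) = of_real (th t) * w"
      "a = mob (- g' 0) (- w)" "b = mob (- g' 0) w"
    using endpoints_of_line[OF g' shift_bot[OF ga, of s0, folded g'_def] shift_top[OF gb, of s0, folded g'_def]] by blast
  obtain v where v: "cmod v = 1" "\<And>t. mob (\<delta> 0) (\<delta> t) = of_real (th t) * v"
      "p = mob (- \<delta> 0) (- v)" "q = mob (- \<delta> 0) v"
    using endpoints_of_line[OF gd dp dq] by blast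
  obtain t1 where t1: "\<delta> 1 = \<gamma> t1" using sub by auto
  have "\<delta> 1 = g' (t1 - s0)" unfolding g'_def t1 by simp
  then have "of_real (th 1) * v = of_real (th (t1 - s0)) * w"
    using v(2)[of 1] w(2)[of "t1 - s0"] g'0 by simp
  then have "v = w \<or> v = - w" by (rule th_norm_eq_1[OF w(1) v(1)])
  then show ?thesis using v(3,4) w(3,4) g'0 by auto
qed

lemma x_on_diameter:
  assumes x: "cmod x < 1" and u: "cmod u = 1" and e: "mob x (- u) = - mob x u"
  shows "\<exists>t. x = of_real (th t) * u"
proof -
  have n1: "1 - cnj x * (- u) \<noteq> 0" and n2: "1 - cnj x * u \<noteq> 0"
    using denom_nz[OF x, of "-u"] denom_nz[OF x, of u] u by auto
  have "(- u - x) / (1 - cnj x * (- u)) = - ((u - x) / (1 - cnj x * u))"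
    using e unfolding mob_def by simp
  then have "(- u - x) * (1 - cnj x * u) = - ((u - x) * (1 - cnj x * (- u)))"
    using n1 n2 by (simp add: divide_simps) (simp add: algebra_simps)
  then have "2 * (cnj x * u * u - x) = 0" by (simp add: algebra_simps)
  then have xe: "x = cnj x * u * u" by simp
  have uu: "u * cnj u = 1" using u complex_norm_square[of u] by simp
  define w where "w = x * cnj u"
  have "w = cnj x * u * (u * cnj u)" unfolding w_def by (subst xe) (simp add: algebra_simps)
  then have "w = cnj w" unfolding w_def uu by simp
  then have "Im w = 0" by (metis complex_cnj_cancel_iff complex_eq_iff complex_cnj_zero_iff
        cnj.simps(2) neg_equal_zero)
  then have wr: "w = of_real (Re w)" by (simp add: complex_eq_iff)
  have xw: "x = w * u" unfolding w_def using uu by (simp add: mult.assoc mult.commute[of "cnj u"])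
  have "\<bar>Re w\<bar> < 1" using x u wr unfolding w_def
    by (metis abs_Re_le_cmod le_less_trans mult_cancel_left1 norm_mult complex_mod_cnj)
  then have "x = of_real (th (2 * artanh (Re w))) * u"
    using tanh_artanh_real xw wr by metis
  then show ?thesis by blast
qed

lemma geod_unique:
  assumes gd: "geodesic_line \<delta>" and dp: "(\<delta> \<longlongrightarrow> p) at_bot" and dq: "(\<delta> \<longlongrightarrow> q) at_top"
  shows "geod p q = range \<delta>"
proof
  show "range \<delta> \<subseteq> geod p q" unfolding geod_def using assms by blast
  show "geod p q \<subseteq> range \<delta>"
  proof
    fix z assume "z \<in> geod p q"
    then obtain \<delta>2 s where d2: "geodesic_line \<delta>2" "(\<delta>2 \<longlongrightarrow> p) at_bot" "(\<delta>2 \<longlongrightarrow> q) at_top" "z = \<delta>2 s"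
      unfolding geod_def by blast
    define c where "c = \<delta> 0"
    have c: "cmod c < 1" unfolding c_def by (rule in_disk[OF gd])
    obtain u where u: "cmod u = 1" "\<And>t. \<delta> t = mob (- c) (of_real (th t) * u)"
        "p = mob (- c) (- u)" "q = mob (- c) u"
      using endpoints_of_line[OF gd dp dq] unfolding c_def by blast
    define e where "e = (\<lambda>t. mob c (\<delta>2 t))"
    have ge: "geodesic_line e" unfolding e_def by (rule geodesic_line_mob[OF c d2(1)])
    have p1: "cmod p = 1" "cmod q = 1" using u mob_on_circle[of "-c"] c by auto
    have mp: "mob c p = - u" using u(3) mob_inv'[OF c, of "-u"] u(1) by simp
    have mq: "mob c q = u" using u(4) mob_inv'[OF c, of "u"] u(1) by simp
    have ep: "(e \<longlongrightarrow> - u) at_bot" unfolding e_def mp[symmetric]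
      by (rule isCont_tendsto_compose[OF isCont_mob[OF c] d2(2)]) (use p1 in simp)
    have eq: "(e \<longlongrightarrow> u) at_top" unfolding e_def mq[symmetric]
      by (rule isCont_tendsto_compose[OF isCont_mob[OF c] d2(3)]) (use p1 in simp)
    have "mob (e s) (- u) = - mob (e s) u" using endpoint_opp[OF ge ep eq] by simp
    then obtain t where t: "e s = of_real (th t) * u"
      using x_on_diameter[OF in_disk[OF ge] u(1)] by blast
    have "z = mob (- c) (mob c z)" using mob_inv[OF c, of z] in_disk[OF d2(1), of s] d2(4) by simp
    also have "\<dots> = \<delta> t" using t u(2)[of t] d2(4) unfolding e_def by simp
    finally show "z \<in> range \<delta>" by simp
  qed
qed


definition dirv :: "complex \<Rightarrow> complex \<Rightarrow> complex" where
  "dirv ob x = mob ob x / of_real (cmod (mob ob x))"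

definition ray :: "complex \<Rightarrow> complex \<Rightarrow> real \<Rightarrow> complex" where
  "ray ob x = (\<lambda>t. mob (- ob) (of_real (th t) * dirv ob x))"

definition valid_pt :: "complex \<Rightarrow> complex \<Rightarrow> bool" where
  "valid_pt ob x \<longleftrightarrow> cmod x = 1 \<or> (cmod x < 1 \<and> x \<noteq> ob)"

lemma mob_eq_0: "cmod c < 1 \<Longrightarrow> cmod x \<le> 1 \<Longrightarrow> mob c x = 0 \<Longrightarrow> x = c"
  unfolding mob_def using denom_nz[of c x] by simp

lemma valid_mob:
  assumes ob: "cmod ob < 1" and v: "valid_pt ob x"
  shows "mob ob x \<noteq> 0" "cmod (mob ob x) \<le> 1" "cmod x \<le> 1"
proof -
  show "cmod x \<le> 1" using v unfolding valid_pt_def by auto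
  then show "mob ob x \<noteq> 0" using mob_eq_0[OF ob] v unfolding valid_pt_def by (metis norm_ge_zero order_less_irrefl norm_eq_zero ob)
  show "cmod (mob ob x) \<le> 1" using v mob_on_circle[OF ob] mob_in_disk[OF ob] unfolding valid_pt_def
    by (metis less_imp_le order_refl)
qed

lemma dirv_norm: "cmod ob < 1 \<Longrightarrow> valid_pt ob x \<Longrightarrow> cmod (dirv ob x) = 1"
  unfolding dirv_def using valid_mob by (simp add: norm_divide)

lemma ray_geod_ray:
  assumes ob: "cmod ob < 1" and v: "valid_pt ob x"
  shows "geod_ray ob x (ray ob x)"
proof -
  let ?d = "dirv ob x"
  have d: "cmod ?d = 1" by (rule dirv_norm[OF ob v])
  have ob': "cmod (- ob) < 1" using ob by simp
  have r0: "ray ob x 0 = ob" unfolding ray_def by simp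
  have rd: "cmod (ray ob x t) < 1" for t unfolding ray_def by (rule mob_in_disk[OF ob' th_in_disk[OF d]])
  have ri: "hdist (ray ob x s) (ray ob x t) = \<bar>s - t\<bar>" for s t
    unfolding ray_def by (simp add: hdist_mob[OF ob' th_in_disk[OF d] th_in_disk[OF d]] hdist_th[OF d])
  have xc: "x \<in> ray ob x ` {0..} \<or> (ray ob x \<longlongrightarrow> x) at_top"
  proof (cases "cmod x = 1")
    case True
    have m1: "cmod (mob ob x) = 1" by (rule mob_on_circle[OF ob True])
    then have "?d = mob ob x" unfolding dirv_def by simp
    moreover have "((\<lambda>t. mob (- ob) (of_real (th t) * ?d)) \<longlongrightarrow> mob (- ob) ?d) at_top"
      by (rule isCont_tendsto_compose[OF isCont_mob[OF ob'] th_tends_top]) (use d in simp)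
    ultimately have "(ray ob x \<longlongrightarrow> mob (- ob) (mob ob x)) at_top" unfolding ray_def by simp
    then show ?thesis using mob_inv[OF ob, of x] True by simp
  next
    case False
    then have x1: "cmod x < 1" using v unfolding valid_pt_def by auto
    let ?m = "mob ob x"
    have m1: "cmod ?m < 1" by (rule mob_in_disk[OF ob x1])
    define t0 where "t0 = hdist 0 ?m"
    have t0: "t0 \<ge> 0" unfolding t0_def using hdist_nonneg[of 0 ?m] m1 by simp
    have "cmod ?m = th t0" unfolding t0_def by (rule hdist_0_norm[OF m1 refl])
    moreover have "th t0 \<noteq> 0" using valid_mob(1)[OF ob v] calculation by (metis norm_eq_zero)
    ultimately have "of_real (th t0) * ?d = ?m" unfolding dirv_def by simp
    then have "ray ob x t0 = x" unfolding ray_def using mob_inv[OF ob, of x] x1 by simp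
    then show ?thesis using t0 by (metis atLeast_iff image_eqI)
  qed
  show ?thesis unfolding geod_ray_def hdisk_def using r0 rd ri xc by auto
qed

lemma ray_unique:
  assumes ob: "cmod ob < 1" and v: "valid_pt ob x" and r: "geod_ray ob x \<rho>"
  shows "\<forall>t\<ge>0. \<rho> t = ray ob x t"
proof -
  have r0: "\<rho> 0 = ob" and rd: "\<And>t. t \<ge> 0 \<Longrightarrow> cmod (\<rho> t) < 1"
    and ri: "\<And>s t. s \<ge> 0 \<Longrightarrow> t \<ge> 0 \<Longrightarrow> hdist (\<rho> s) (\<rho> t) = \<bar>s - t\<bar>"
    and xc: "x \<in> \<rho> ` {0..} \<or> (\<rho> \<longlongrightarrow> x) at_top"
    using r unfolding geod_ray_def hdisk_def by auto
  let ?r = "\<lambda>t. mob ob (\<rho> t)"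
  have "\<exists>u. cmod u = 1 \<and> (\<forall>t\<ge>0. ?r t = of_real (th t) * u)"
  proof (rule ray_class)
    show "?r 0 = 0" using r0 by simp
    show "\<forall>t\<ge>0. cmod (?r t) < 1" using rd mob_in_disk[OF ob] by auto
    show "\<forall>s\<ge>0. \<forall>t\<ge>0. hdist (?r s) (?r t) = \<bar>s - t\<bar>" using ri rd hdist_mob[OF ob] by auto
  qed
  then obtain u where u: "cmod u = 1" "\<forall>t\<ge>0. ?r t = of_real (th t) * u" by blast
  have inv: "\<rho> t = mob (- ob) (?r t)" if "t \<ge> 0" for t
    using mob_inv[OF ob, of "\<rho> t"] rd[OF that] by simp
  have ud: "u = dirv ob x"
    using xc
  proof
    assume "x \<in> \<rho> ` {0..}"
    then obtain t0 where t0: "t0 \<ge> 0" "x = \<rho> t0" by auto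
    have "t0 \<noteq> 0" using v r0 t0 rd[OF t0(1)] unfolding valid_pt_def by auto
    then have tp: "th t0 > 0" using t0 th_pos by simp
    have "mob ob x = of_real (th t0) * u" using u(2) t0 by simp
    then show ?thesis unfolding dirv_def using tp u(1) by (simp add: norm_mult)
  next
    assume lim: "(\<rho> \<longlongrightarrow> x) at_top"
    have "(?r \<longlongrightarrow> mob ob x) at_top"
      by (rule isCont_tendsto_compose[OF isCont_mob[OF ob valid_mob(3)[OF ob v]] lim])
    moreover have "(?r \<longlongrightarrow> u) at_top"
    proof (rule Lim_transform_eventually[OF th_tends_top[of u]])
      show "\<forall>\<^sub>F t in at_top. of_real (th t) * u = ?r t"
        using u(2) by (auto simp: eventually_at_top_linorder intro!: exI[of _ 0])
    qed
    ultimately have "mob ob x = u" using tendsto_unique by force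
    then show ?thesis unfolding dirv_def using u(1) by simp
  qed
  show ?thesis using inv u(2) ud unfolding ray_def by simp
qed

lemma ray_deriv:
  assumes ob: "cmod ob < 1" and d: "cmod d = 1"
  shows "((\<lambda>t. mob (- ob) (of_real (th t) * d)) has_vector_derivative
           (of_real ((1 - (cmod ob)\<^sup>2) / 2) * d)) (at 0)"
proof -
  have th': "(th has_field_derivative (1/2)) (at 0)"
    unfolding th_def[abs_def] by (rule derivative_eq_intros refl | simp)+
  have f: "((\<lambda>t. of_real (th t) :: complex) has_vector_derivative of_real (1/2)) (at 0)"
    by (rule has_vector_derivative_of_real[OF th'])
  let ?g = "\<lambda>z. (z * d + ob) / (1 + cnj ob * (z * d))"
  have g: "(?g has_field_derivative (d - ob * (cnj ob * d))) (at 0)"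
    by (rule derivative_eq_intros refl | simp)+
  have D: "((?g \<circ> (\<lambda>t. of_real (th t))) has_vector_derivative (of_real (1/2) * (d - ob * (cnj ob * d)))) (at 0)"
    by (rule field_vector_diff_chain_at[OF f]) (use g in simp)
  have E: "(?g \<circ> (\<lambda>t. of_real (th t))) = (\<lambda>t. mob (- ob) (of_real (th t) * d))"
    by (auto simp: mob_def)
  have A: "of_real (1/2) * (d - ob * (cnj ob * d)) = of_real ((1 - (cmod ob)\<^sup>2) / 2) * d"
  proof -
    have "ob * cnj ob = of_real ((cmod ob)\<^sup>2)" using complex_norm_square[of ob] by simp
    then show ?thesis by (simp add: algebra_simps)
  qed
  show ?thesis using D unfolding E A .
qed

lemma vec_angle_scale:
  assumes "\<alpha> > 0" shows "vec_angle (of_real \<alpha> * a) (of_real \<alpha> * b) = vec_angle a b"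
proof -
  have "Re (of_real \<alpha> * a * cnj (of_real \<alpha> * b)) = \<alpha> * \<alpha> * Re (a * cnj b)"
    by (simp add: algebra_simps)
  moreover have "cmod (of_real \<alpha> * a) * cmod (of_real \<alpha> * b) = \<alpha> * \<alpha> * (cmod a * cmod b)"
    using assms by (simp add: norm_mult algebra_simps)
  ultimately show ?thesis unfolding vec_angle_def using assms by simp
qed

lemma at0_nontriv: "at (0::real) within {0..} \<noteq> bot"
proof
  assume "at (0::real) within {0..} = bot"
  moreover have "at_right (0::real) \<le> at (0::real) within {0..}" by (rule at_le) auto
  ultimately have "at_right (0::real) = bot" by (simp add: bot_unique)
  then show False using trivial_limit_at_right_real[of 0] by simp
qed

lemma ray_deriv_within:
  assumes ob: "cmod ob < 1" and v: "valid_pt ob x"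
  shows "(ray ob x has_vector_derivative (of_real ((1 - (cmod ob)\<^sup>2) / 2) * dirv ob x)) (at 0 within {0..})"
  unfolding ray_def by (rule has_vector_derivative_at_within[OF ray_deriv[OF ob dirv_norm[OF ob v]]])

lemma deriv_of_ray:
  assumes ob: "cmod ob < 1" and v: "valid_pt ob x" and r: "geod_ray ob x \<rho>"
    and D: "(\<rho> has_vector_derivative u) (at 0 within {0..})"
  shows "u = of_real ((1 - (cmod ob)\<^sup>2) / 2) * dirv ob x"
proof -
  have "(\<rho> has_vector_derivative (of_real ((1 - (cmod ob)\<^sup>2) / 2) * dirv ob x)) (at 0 within {0..})"
    by (rule has_vector_derivative_transform_within[OF ray_deriv_within[OF ob v], of 1])
       (use ray_unique[OF ob v r] in auto)
  then show ?thesis using vector_derivative_unique_within[OF at0_nontriv D] by simp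
qed

lemma visual_dist_eq:
  assumes ob: "cmod ob < 1" and vx: "valid_pt ob x" and vy: "valid_pt ob y"
  shows "visual_dist ob x y = vec_angle (dirv ob x) (dirv ob y)"
proof -
  let ?a = "(1 - (cmod ob)\<^sup>2) / 2"
  have a: "?a > 0" using sq_lt1[OF ob] by simp
  show ?thesis unfolding visual_dist_def
  proof (rule the_equality)
    show "\<exists>\<rho>1 \<rho>2 u v. geod_ray ob x \<rho>1 \<and> geod_ray ob y \<rho>2 \<and>
      (\<rho>1 has_vector_derivative u) (at 0 within {0..}) \<and>
      (\<rho>2 has_vector_derivative v) (at 0 within {0..}) \<and> vec_angle (dirv ob x) (dirv ob y) = vec_angle u v"
      using ray_geod_ray[OF ob vx] ray_geod_ray[OF ob vy] ray_deriv_within[OF ob vx] ray_deriv_within[OF ob vy]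
        vec_angle_scale[OF a] by metis
  next
    fix \<theta> assume "\<exists>\<rho>1 \<rho>2 u v. geod_ray ob x \<rho>1 \<and> geod_ray ob y \<rho>2 \<and>
      (\<rho>1 has_vector_derivative u) (at 0 within {0..}) \<and>
      (\<rho>2 has_vector_derivative v) (at 0 within {0..}) \<and> \<theta> = vec_angle u v"
    then obtain \<rho>1 \<rho>2 u v where h: "geod_ray ob x \<rho>1" "geod_ray ob y \<rho>2"
      "(\<rho>1 has_vector_derivative u) (at 0 within {0..})"
      "(\<rho>2 has_vector_derivative v) (at 0 within {0..})" "\<theta> = vec_angle u v" by blast
    show "\<theta> = vec_angle (dirv ob x) (dirv ob y)"
      using h(5) deriv_of_ray[OF ob vx h(1) h(3)] deriv_of_ray[OF ob vy h(2) h(4)] vec_angle_scale[OF a] by simp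
  qed
qed

lemma small_angle:
  assumes ob: "cmod ob < 1" and vx: "valid_pt ob x" and vy: "valid_pt ob y"
    and e: "visual_dist ob x y < \<epsilon>" and e1: "\<epsilon> \<le> pi"
  shows "(cmod (dirv ob x - dirv ob y))\<^sup>2 < 2 - 2 * cos \<epsilon>"
proof -
  let ?c = "Re (dirv ob x * cnj (dirv ob y))"
  have n: "cmod (dirv ob x) = 1" "cmod (dirv ob y) = 1" using dirv_norm ob vx vy by auto
  have c1: "\<bar>?c\<bar> \<le> 1" using abs_Re_le_cmod[of "dirv ob x * cnj (dirv ob y)"] n by (simp add: norm_mult)
  have "arccos ?c < \<epsilon>" using e unfolding visual_dist_eq[OF ob vx vy] vec_angle_def n by simp
  then have "cos \<epsilon> < cos (arccos ?c)"
    using cos_monotone_0_pi[of "arccos ?c" \<epsilon>] arccos_lbound[of ?c] c1 e1 by auto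
  then have "cos \<epsilon> < ?c" using cos_arccos_abs[OF c1] by simp
  then show ?thesis unfolding cmod_diff_sq n by simp
qed


lemma msupp_compl_open: "open (- msupp (M::'a::topological_space measure))"
proof (rule Topological_Spaces.openI)
  fix x assume "x \<in> - msupp M"
  then have "\<not> (\<forall>U. open U \<and> x \<in> U \<longrightarrow> emeasure M U > 0)" unfolding msupp_def by simp
  then obtain U where U: "open U" "x \<in> U" "\<not> emeasure M U > 0" by blast
  have "U \<subseteq> - msupp M"
  proof
    fix y assume "y \<in> U"
    then show "y \<in> - msupp M" using U unfolding msupp_def by auto
  qed
  then show "\<exists>T. open T \<and> x \<in> T \<and> T \<subseteq> - msupp M" using U by blast
qed

lemma msupp_closed: "closed (msupp M)"
  unfolding closed_def by (rule msupp_compl_open)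

lemma msupp_compl_null:
  fixes M :: "'a::second_countable_topology measure"
  assumes sM: "sets M = sets borel"
  shows "emeasure M (- msupp M) = 0"
proof -
  define F where "F = {U. open U \<and> emeasure M U = 0}"
  have UF: "\<Union>F = - msupp M"
  proof
    show "\<Union>F \<subseteq> - msupp M"
    proof
      fix x assume "x \<in> \<Union>F"
      then obtain U where U: "open U" "emeasure M U = 0" "x \<in> U" unfolding F_def by blast
      show "x \<in> - msupp M"
      proof
        assume "x \<in> msupp M"
        then have "emeasure M U > 0" using U unfolding msupp_def by blast
        then show False using U by simp
      qed
    qed
    show "- msupp M \<subseteq> \<Union>F"
    proof
      fix x assume "x \<in> - msupp M"
      then obtain U where U: "open U" "x \<in> U" "\<not> emeasure M U > 0" unfolding msupp_def by blast
      then have "emeasure M U = 0" using not_gr_zero by blast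
      then have "U \<in> F" using U unfolding F_def by blast
      then show "x \<in> \<Union>F" using U by blast
    qed
  qed
  have opF: "\<And>S. S \<in> F \<Longrightarrow> open S" unfolding F_def by blast
  obtain F' where F': "F' \<subseteq> F" "countable F'" "\<Union>F' = \<Union>F"
    by (rule Lindelof[of F, OF opF])
  have "(\<Union>i\<in>F'. id i) \<in> null_sets M"
  proof (rule null_sets_UN'[OF F'(2)])
    fix i assume "i \<in> F'"
    then have "open i" "emeasure M i = 0" using F'(1) unfolding F_def by auto
    then show "id i \<in> null_sets M" using sM borel_open[of i] by (intro null_setsI) auto
  qed
  moreover have "(\<Union>i\<in>F'. id i) = - msupp M" using F'(3) UF by simp
  ultimately show ?thesis by (metis null_setsD1)
qed

lemma inum_zero:
  assumes ml: "measured_lamination M" and L: "L \<in> leaves M" and sub: "\<sigma> \<subseteq> L"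
  shows "inum \<sigma> M = 0"
proof -
  have sM: "sets M = sets borel" and dis: "\<forall>F\<in>leaves M. \<forall>G\<in>leaves M. F \<noteq> G \<longrightarrow> F \<inter> G = {}"
    using ml unfolding measured_lamination_def by auto
  have S: "{(p, q) \<in> pos_pairs. geod p q \<inter> \<sigma> \<noteq> {} \<and> \<not> \<sigma> \<subseteq> geod p q} \<subseteq> - msupp M"
  proof
    fix pq assume pq: "pq \<in> {(p, q) \<in> pos_pairs. geod p q \<inter> \<sigma> \<noteq> {} \<and> \<not> \<sigma> \<subseteq> geod p q}"
    obtain p q where pqe: "pq = (p, q)" by fastforce
    show "pq \<in> - msupp M"
    proof
      assume "pq \<in> msupp M"
      then have "geod p q \<in> leaves M" using pq pqe unfolding leaves_def by blast
      moreover have "geod p q \<noteq> L" using pq pqe sub by auto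
      moreover have "geod p q \<inter> L \<noteq> {}" using pq pqe sub by auto
      ultimately show False using dis L by blast
    qed
  qed
  have "inum \<sigma> M \<le> emeasure M (- msupp M)" unfolding inum_def
    by (rule emeasure_mono[OF S]) (use sM borel_open[OF msupp_compl_open[of M]] in simp)
  then show ?thesis using msupp_compl_null[OF sM] by simp
qed


lemma hseg_sub:
  assumes g: "geodesic_line g" and c: "c > 0"
  shows "hseg (g 0) (g c) \<subseteq> range g"
proof
  fix z assume z: "z \<in> hseg (g 0) (g c)"
  define b where "b = g 0"
  have b: "cmod b < 1" unfolding b_def by (rule in_disk[OF g])
  obtain u where u: "cmod u = 1" "\<And>t. g t = mob (- b) (of_real (th t) * u)"
      "\<And>t. mob b (g t) = of_real (th t) * u"
    using line_class'[OF g] unfolding b_def by blast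
  have zd: "cmod z < 1" and ze: "hdist b z + hdist z (g c) = hdist b (g c)"
    using z unfolding hseg_def hdisk_def b_def by auto
  let ?z = "mob b z" and ?y = "of_real (th c) * u"
  have gc: "cmod (g c) < 1" by (rule in_disk[OF g])
  have "hdist 0 ?z + hdist ?z ?y = hdist 0 ?y"
    using ze hdist_mob[OF b b zd] hdist_mob[OF b zd gc] hdist_mob[OF b b gc] u(3)[of c] by simp
  then have Re: "Re (?z * cnj ?y) = cmod ?z * cmod ?y"
    using collinear_0[OF mob_in_disk[OF b zd] th_in_disk[OF u(1)]] by simp
  have tc: "th c > 0" using th_pos c by simp
  have y0: "?y \<noteq> 0" using tc u(1) by auto
  have "?z = of_real (cmod ?z / cmod ?y) * ?y" by (rule same_dir[OF y0 Re])
  then have zu: "?z = of_real (cmod ?z) * u" using tc u(1) by (simp add: norm_mult)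
  have zl: "\<bar>cmod ?z\<bar> < 1" using mob_in_disk[OF b zd] by simp
  define t1 where "t1 = 2 * artanh (cmod ?z)"
  have "?z = of_real (th t1) * u" unfolding t1_def tanh_artanh_real[OF zl] by (rule zu)
  then have "mob (- b) ?z = g t1" using u(2)[of t1] by simp
  moreover have "mob (- b) ?z = z" using mob_inv[OF b, of z] zd by simp
  ultimately show "z \<in> range g" by auto
qed

lemma no_common_leaf:
  assumes mlm: "measured_lamination Lm" and mlp: "measured_lamination Lp"
    and sf: "strongly_fill Lm Lp" and g: "geodesic_line g"
    and lm: "range g \<in> leaves Lm" and lp: "range g \<in> leaves Lp"
  shows False
proof -
  obtain c where c: "c > 0" and h: "\<forall>x\<in>hdisk. \<forall>y\<in>hdisk. hdist x y \<ge> c \<longrightarrow>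
      inum (hseg x y) Lm + inum (hseg x y) Lp \<ge> ennreal 1"
    using sf unfolding strongly_fill_def by (meson zero_less_one)
  have xy: "g 0 \<in> hdisk" "g c \<in> hdisk" using g unfolding geodesic_line_def by auto
  have "hdist (g 0) (g c) = c" using g c unfolding geodesic_line_def by simp
  then have "inum (hseg (g 0) (g c)) Lm + inum (hseg (g 0) (g c)) Lp \<ge> ennreal 1"
    using h xy by auto
  moreover have "inum (hseg (g 0) (g c)) Lm = 0" by (rule inum_zero[OF mlm lm hseg_sub[OF g c]])
  moreover have "inum (hseg (g 0) (g c)) Lp = 0" by (rule inum_zero[OF mlp lp hseg_sub[OF g c]])
  ultimately show False by simp
qed

lemma pos_pairs_limit:
  assumes pp: "\<And>k. (P k, Q k) \<in> pos_pairs" and P: "P \<longlonglongrightarrow> p" and Q: "Q \<longlonglongrightarrow> q" and pq: "p \<noteq> q"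
  shows "(p, q) \<in> pos_pairs"
proof -
  have n: "\<And>k. cmod (P k) = 1" "\<And>k. cmod (Q k) = 1" "\<And>k. 0 < Arg (Q k / P k)"
    using pp unfolding pos_pairs_def by auto
  have "(\<lambda>k. cmod (P k)) \<longlonglongrightarrow> cmod p" by (rule tendsto_norm[OF P])
  then have "(\<lambda>k. 1::real) \<longlonglongrightarrow> cmod p" using n(1) by simp
  then have p1: "cmod p = 1" using LIMSEQ_unique[OF _ tendsto_const] by blast
  have "(\<lambda>k. cmod (Q k)) \<longlonglongrightarrow> cmod q" by (rule tendsto_norm[OF Q])
  then have "(\<lambda>k. 1::real) \<longlonglongrightarrow> cmod q" using n(2) by simp
  then have q1: "cmod q = 1" using LIMSEQ_unique[OF _ tendsto_const] by blast
  have p0: "p \<noteq> 0" using p1 by auto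
  have lim: "(\<lambda>k. Im (Q k / P k)) \<longlonglongrightarrow> Im (q / p)"
    by (intro tendsto_intros Q P p0)
  have ge: "\<And>k. Im (Q k / P k) \<ge> 0" using n(3) Arg_pos_iff by (metis less_eq_real_def)
  have im: "Im (q / p) \<ge> 0" using LIMSEQ_le_const[OF lim] ge by blast
  have qp1: "cmod (q / p) = 1" using p1 q1 by (simp add: norm_divide)
  have "0 < Arg (q / p)"
  proof (cases "Im (q / p) = 0")
    case False then show ?thesis using im Arg_pos_iff by auto
  next
    case True
    then have "\<bar>Re (q / p)\<bar> = 1" using qp1 by (simp add: cmod_def)
    then have "Re (q / p) = 1 \<or> Re (q / p) = -1" by auto
    moreover have "Re (q / p) \<noteq> 1"
    proof
      assume "Re (q / p) = 1"
      then have "q / p = 1" using True by (simp add: complex_eq_iff)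
      then show False using pq p0 by simp
    qed
    ultimately show ?thesis using True Arg_pos_iff by auto
  qed
  then show ?thesis unfolding pos_pairs_def using p1 q1 by simp
qed

lemma side_data:
  assumes g: "geodesic_line \<gamma>" and L: "range \<gamma> \<in> leaves L" and a: "(\<gamma> \<longlongrightarrow> a) at_bot"
  shows "\<exists>w p q. cmod w = 1 \<and> a = mob (- \<gamma> t) (- w) \<and> (p, q) \<in> msupp L \<and> (p, q) \<in> pos_pairs \<and>
     (mob (- \<gamma> t) (- w) = p \<or> mob (- \<gamma> t) (- w) = q) \<and> (mob (- \<gamma> t) w = p \<or> mob (- \<gamma> t) w = q)"
proof -
  obtain p q where pq: "range \<gamma> = geod p q" "(p, q) \<in> msupp L" "(p, q) \<in> pos_pairs"
    using L unfolding leaves_def by blast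
  define g' where "g' = (\<lambda>s. \<gamma> (s + t))"
  have g': "geodesic_line g'" unfolding g'_def by (rule geodesic_shift[OF g])
  have g'0: "g' 0 = \<gamma> t" unfolding g'_def by simp
  obtain w where w: "cmod w = 1" "\<And>s. g' s = mob (- g' 0) (of_real (th s) * w)"
    "\<And>s. mob (g' 0) (g' s) = of_real (th s) * w"
    by (metis line_class'[OF g'])
  have bot: "(g' \<longlongrightarrow> mob (- \<gamma> t) (- w)) at_bot" and top: "(g' \<longlongrightarrow> mob (- \<gamma> t) w) at_top"
    using line_limits[OF g' w(1,2)] unfolding g'0 by auto
  have a': "(g' \<longlongrightarrow> a) at_bot" unfolding g'_def by (rule shift_bot[OF a])
  have aw: "a = mob (- \<gamma> t) (- w)" using tendsto_unique[OF _ a' bot] by simp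
  have "\<gamma> t \<in> geod p q" using pq(1) by auto
  then obtain \<delta> where d: "geodesic_line \<delta>" "(\<delta> \<longlongrightarrow> p) at_bot" "(\<delta> \<longlongrightarrow> q) at_top"
    unfolding geod_def by blast
  have "range \<delta> \<subseteq> range g'"
  proof
    fix x assume "x \<in> range \<delta>"
    then have "x \<in> range \<gamma>" using pq(1) d unfolding geod_def by blast
    then obtain s1 where "x = \<gamma> s1" by auto
    then have "x = g' (s1 - t)" unfolding g'_def by simp
    then show "x \<in> range g'" by auto
  qed
  then have "(p = mob (- \<gamma> t) (- w) \<and> q = mob (- \<gamma> t) w) \<or> (p = mob (- \<gamma> t) w \<and> q = mob (- \<gamma> t) (- w))"
    using same_range_endpoints[OF g' d(1) _ d(2,3) bot top] by blast
  then show ?thesis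
    by (intro exI[of _ w] exI[of _ p] exI[of _ q]) (use w(1) aw pq(2,3) in auto)
qed


definition Ep :: "complex \<Rightarrow> complex \<Rightarrow> complex \<Rightarrow> complex" where
  "Ep ob v w = mob (- mob (- ob) v) w"

lemma mob_tendsto:
  assumes "C \<longlonglongrightarrow> c" "Z \<longlonglongrightarrow> z" "cmod c < 1" "cmod z \<le> 1"
  shows "(\<lambda>k. mob (C k) (Z k)) \<longlonglongrightarrow> mob c z"
  unfolding mob_def using denom_nz[OF assms(3,4)] by (intro tendsto_intros assms) auto

lemma Ep_tendsto:
  assumes ob: "cmod ob < 1" and V: "V \<longlonglongrightarrow> v" and W: "W \<longlonglongrightarrow> w" and v: "cmod v < 1" and w: "cmod w \<le> 1"
  shows "(\<lambda>k. Ep ob (V k) (W k)) \<longlonglongrightarrow> Ep ob v w"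
proof -
  have "(\<lambda>k. mob (- ob) (V k)) \<longlonglongrightarrow> mob (- ob) v"
    by (rule mob_tendsto[OF tendsto_const V]) (use ob v in auto)
  then have "(\<lambda>k. - mob (- ob) (V k)) \<longlonglongrightarrow> - mob (- ob) v" by (rule tendsto_minus)
  moreover have "cmod (- mob (- ob) v) < 1" using mob_in_disk[of "-ob" v] ob v by simp
  ultimately show ?thesis unfolding Ep_def by (rule mob_tendsto[OF _ W _ w])
qed

lemma range_rev: "range (\<lambda>t::real. g (- t)) = range g"
proof
  show "range (\<lambda>t::real. g (- t)) \<subseteq> range g" by auto
  show "range g \<subseteq> range (\<lambda>t::real. g (- t))"
  proof
    fix x assume "x \<in> range g" then obtain t where "x = g t" by auto
    then have "x = (\<lambda>t. g (- t)) (- t)" by simp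
    then show "x \<in> range (\<lambda>t::real. g (- t))" by blast
  qed
qed

lemma leaf_from_limit:
  assumes pq: "(p, q) \<in> msupp L" "(p, q) \<in> pos_pairs" and b: "cmod b < 1" and w: "cmod w = 1"
    and e1: "mob (- b) (- w) = p \<or> mob (- b) (- w) = q" and e2: "mob (- b) w = p \<or> mob (- b) w = q"
  shows "range (\<lambda>t. mob (- b) (of_real (th t) * w)) \<in> leaves L"
proof -
  define g where "g = (\<lambda>t. mob (- b) (of_real (th t) * w))"
  have b': "cmod (- b) < 1" using b by simp
  have gg: "geodesic_line g" unfolding g_def by (rule geodesic_line_mob[OF b' geodesic_line_std[OF w]])
  have g0: "g 0 = b" unfolding g_def by simp
  have ge: "\<And>t. g t = mob (- g 0) (of_real (th t) * w)" unfolding g0 unfolding g_def ..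
  have top: "(g \<longlongrightarrow> mob (- b) w) at_top" and bot: "(g \<longlongrightarrow> mob (- b) (- w)) at_bot"
    using line_limits[OF gg w ge] unfolding g0 by auto
  have ne: "mob (- b) (- w) \<noteq> mob (- b) w"
  proof
    assume "mob (- b) (- w) = mob (- b) w"
    then have "mob b (mob (- b) (- w)) = mob b (mob (- b) w)" by simp
    then have "- w = w" using mob_inv'[OF b, of w] mob_inv'[OF b, of "-w"] w by simp
    then have "Re w = 0" "Im w = 0" by (simp_all add: complex_eq_iff)
    then have "w = 0" by (simp add: complex_eq_iff)
    then show False using w by simp
  qed
  have leaf: "geod p q \<in> leaves L" unfolding leaves_def using pq by blast
  have "p = mob (- b) (- w) \<and> q = mob (- b) w \<or> p = mob (- b) w \<and> q = mob (- b) (- w)"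
    using e1 e2 ne pq(2) unfolding pos_pairs_def by auto
  then have "geod p q = range g"
  proof
    assume "p = mob (- b) (- w) \<and> q = mob (- b) w"
    then show ?thesis using geod_unique[OF gg] bot top by simp
  next
    assume h: "p = mob (- b) w \<and> q = mob (- b) (- w)"
    have "geod p q = range (\<lambda>t. g (- t))"
      using geod_unique[OF geodesic_rev[OF gg] rev_bot[OF top] rev_top[OF bot]] h by simp
    then show ?thesis using range_rev by simp
  qed
  then show ?thesis using leaf unfolding g_def by simp
qed


lemma fh_data:
  assumes ob: "cmod ob < 1" and r: "r > 0" and g: "geodesic_line \<gamma>" and fh: "first_hit ob r \<gamma> t"
  shows "cmod (mob ob (\<gamma> t)) = th r" "\<gamma> t = mob (- ob) (mob ob (\<gamma> t))" "valid_pt ob (\<gamma> t)"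
    "dirv ob (\<gamma> t) = mob ob (\<gamma> t) / of_real (th r)"
proof -
  have d: "hdist ob (\<gamma> t) = r" using fh unfolding first_hit_def by simp
  have gt: "cmod (\<gamma> t) < 1" by (rule in_disk[OF g])
  have "hdist 0 (mob ob (\<gamma> t)) = r" using hdist_mob[OF ob ob gt] d by simp
  then show n: "cmod (mob ob (\<gamma> t)) = th r" using hdist_0_norm mob_in_disk[OF ob gt] by blast
  show "\<gamma> t = mob (- ob) (mob ob (\<gamma> t))" using mob_inv[OF ob, of "\<gamma> t"] gt by simp
  have "\<gamma> t \<noteq> ob" using d r hdist_self[of ob] by auto
  then show "valid_pt ob (\<gamma> t)" unfolding valid_pt_def using gt by simp
  show "dirv ob (\<gamma> t) = mob ob (\<gamma> t) / of_real (th r)" unfolding dirv_def n ..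
qed

lemma bad_to_good:
  assumes ob: "cmod ob < 1" and r: "r > 0" and e: "e \<le> pi"
    and gm: "geodesic_line \<gamma>m" and lm: "range \<gamma>m \<in> leaves Lm"
    and gp: "geodesic_line \<gamma>p" and lp: "range \<gamma>p \<in> leaves Lp"
    and am: "(\<gamma>m \<longlongrightarrow> am) at_bot" and ap: "(\<gamma>p \<longlongrightarrow> ap) at_bot"
    and fm: "first_hit ob r \<gamma>m tm" and fp: "first_hit ob r \<gamma>p tp"
    and va: "visual_dist ob am ap < e" and vb: "visual_dist ob (\<gamma>m tm) (\<gamma>p tp) < e"
  shows "\<exists>vm wm pm qm vp wp pp qp.
    cmod vm = th r \<and> cmod wm = 1 \<and> (pm, qm) \<in> msupp Lm \<and> (pm, qm) \<in> pos_pairs \<and>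
    (Ep ob vm (- wm) = pm \<or> Ep ob vm (- wm) = qm) \<and> (Ep ob vm wm = pm \<or> Ep ob vm wm = qm) \<and>
    cmod vp = th r \<and> cmod wp = 1 \<and> (pp, qp) \<in> msupp Lp \<and> (pp, qp) \<in> pos_pairs \<and>
    (Ep ob vp (- wp) = pp \<or> Ep ob vp (- wp) = qp) \<and> (Ep ob vp wp = pp \<or> Ep ob vp wp = qp) \<and>
    (cmod (mob ob (Ep ob vm (- wm)) - mob ob (Ep ob vp (- wp))))\<^sup>2 < 2 - 2 * cos e \<and>
    (cmod (vm - vp))\<^sup>2 < (th r)\<^sup>2 * (2 - 2 * cos e)"
proof -
  obtain wm pm qm where sm: "cmod wm = 1" "am = mob (- \<gamma>m tm) (- wm)" "(pm, qm) \<in> msupp Lm"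
    "(pm, qm) \<in> pos_pairs" "mob (- \<gamma>m tm) (- wm) = pm \<or> mob (- \<gamma>m tm) (- wm) = qm"
    "mob (- \<gamma>m tm) wm = pm \<or> mob (- \<gamma>m tm) wm = qm"
    using side_data[OF gm lm am, of tm] by blast
  obtain wp pp qp where sp: "cmod wp = 1" "ap = mob (- \<gamma>p tp) (- wp)" "(pp, qp) \<in> msupp Lp"
    "(pp, qp) \<in> pos_pairs" "mob (- \<gamma>p tp) (- wp) = pp \<or> mob (- \<gamma>p tp) (- wp) = qp"
    "mob (- \<gamma>p tp) wp = pp \<or> mob (- \<gamma>p tp) wp = qp"
    using side_data[OF gp lp ap, of tp] by blast
  note dm = fh_data[OF ob r gm fm] and dp = fh_data[OF ob r gp fp]
  define vm where "vm = mob ob (\<gamma>m tm)"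
  define vp where "vp = mob ob (\<gamma>p tp)"
  have bm: "\<gamma>m tm = mob (- ob) vm" and bp: "\<gamma>p tp = mob (- ob) vp" using dm(2) dp(2) unfolding vm_def vp_def .
  have Em: "mob (- \<gamma>m tm) = Ep ob vm" unfolding Ep_def bm ..
  have Ep': "mob (- \<gamma>p tp) = Ep ob vp" unfolding Ep_def bp ..
  have cm: "cmod (- \<gamma>m tm) < 1" "cmod (- \<gamma>p tp) < 1" using in_disk[OF gm] in_disk[OF gp] by auto
  have am1: "cmod am = 1" using sm(1,2) mob_on_circle[OF cm(1), of "-wm"] by simp
  have ap1: "cmod ap = 1" using sp(1,2) mob_on_circle[OF cm(2), of "-wp"] by simp
  have vam: "valid_pt ob am" "valid_pt ob ap" using am1 ap1 unfolding valid_pt_def by auto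
  have "(cmod (dirv ob am - dirv ob ap))\<^sup>2 < 2 - 2 * cos e" by (rule small_angle[OF ob vam va e])
  moreover have "dirv ob am = mob ob am" "dirv ob ap = mob ob ap"
    unfolding dirv_def using mob_on_circle[OF ob am1] mob_on_circle[OF ob ap1] by simp_all
  ultimately have A: "(cmod (mob ob (Ep ob vm (- wm)) - mob ob (Ep ob vp (- wp))))\<^sup>2 < 2 - 2 * cos e"
    using sm(2) sp(2) Em Ep' by simp
  have "(cmod (dirv ob (\<gamma>m tm) - dirv ob (\<gamma>p tp)))\<^sup>2 < 2 - 2 * cos e"
    by (rule small_angle[OF ob dm(3) dp(3) vb e])
  then have "(cmod ((vm - vp) / of_real (th r)))\<^sup>2 < 2 - 2 * cos e"
    unfolding dm(4) dp(4) vm_def vp_def by (simp add: diff_divide_distrib)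
  moreover have "th r > 0" using th_pos r by simp
  ultimately have B: "(cmod (vm - vp))\<^sup>2 < (th r)\<^sup>2 * (2 - 2 * cos e)"
    by (simp add: norm_divide power_divide divide_less_eq mult.commute)
  show ?thesis
    apply (rule exI[of _ vm], rule exI[of _ wm], rule exI[of _ pm], rule exI[of _ qm])
    apply (rule exI[of _ vp], rule exI[of _ wp], rule exI[of _ pp], rule exI[of _ qp])
    using sm sp dm(1) dp(1) A B Em Ep' unfolding vm_def[symmetric] vp_def[symmetric] by simp
qed


lemma mob_neq:
  assumes b: "cmod b < 1" and w: "cmod w = 1" shows "mob (- b) (- w) \<noteq> mob (- b) w"
proof
  assume "mob (- b) (- w) = mob (- b) w"
  then have "mob b (mob (- b) (- w)) = mob b (mob (- b) w)" by simp
  then have "- w = w" using mob_inv'[OF b, of w] mob_inv'[OF b, of "-w"] w by simp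
  then have "Re w = 0" "Im w = 0" by (simp_all add: complex_eq_iff)
  then have "w = 0" by (simp add: complex_eq_iff)
  then show False using w by simp
qed

lemma lim_const_norm:
  assumes "X \<longlonglongrightarrow> x" "\<And>k. cmod (X k) = R" shows "cmod x = R"
proof -
  have "(\<lambda>k. cmod (X k)) \<longlonglongrightarrow> cmod x" by (rule tendsto_norm[OF assms(1)])
  then have "(\<lambda>k. R) \<longlonglongrightarrow> cmod x" using assms(2) by simp
  then show ?thesis using LIMSEQ_unique[OF _ tendsto_const] by blast
qed

lemma lim_in2:
  fixes E P Q :: "nat \<Rightarrow> complex"
  assumes E: "E \<longlonglongrightarrow> e" and P: "P \<longlonglongrightarrow> p" and Q: "Q \<longlonglongrightarrow> q"
    and h: "\<And>k. E k = P k \<or> E k = Q k"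
  shows "e = p \<or> e = q"
proof -
  have "(\<lambda>k. (E k - P k) * (E k - Q k)) \<longlonglongrightarrow> (e - p) * (e - q)"
    by (intro tendsto_intros E P Q)
  moreover have "(\<lambda>k. (E k - P k) * (E k - Q k)) = (\<lambda>k. 0)" using h by (auto intro!: ext)
  ultimately have "(\<lambda>k. 0::complex) \<longlonglongrightarrow> (e - p) * (e - q)" by simp
  then have "(e - p) * (e - q) = 0" using LIMSEQ_unique[OF _ tendsto_const] by metis
  then show ?thesis by simp
qed

lemma limit_side:
  assumes ob: "cmod ob < 1" and R: "R < 1"
    and V: "V \<longlonglongrightarrow> v" and W: "W \<longlonglongrightarrow> w" and P: "P \<longlonglongrightarrow> p" and Q: "Q \<longlonglongrightarrow> q"
    and h: "\<And>k. cmod (V k) = R \<and> cmod (W k) = 1 \<and> (P k, Q k) \<in> msupp L \<and> (P k, Q k) \<in> pos_pairs \<and>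
    (Ep ob (V k) (- W k) = P k \<or> Ep ob (V k) (- W k) = Q k) \<and> (Ep ob (V k) (W k) = P k \<or> Ep ob (V k) (W k) = Q k)"
  shows "cmod v = R" "cmod w = 1" "range (\<lambda>t. mob (- mob (- ob) v) (of_real (th t) * w)) \<in> leaves L"
proof -
  show v: "cmod v = R" using lim_const_norm[OF V] h by blast
  show w: "cmod w = 1" using lim_const_norm[OF W] h by blast
  have v1: "cmod v < 1" using v R by simp
  have b: "cmod (mob (- ob) v) < 1" using mob_in_disk[of "-ob" v] ob v1 by simp
  have Em: "(\<lambda>k. Ep ob (V k) (- W k)) \<longlonglongrightarrow> Ep ob v (- w)"
    by (rule Ep_tendsto[OF ob V tendsto_minus[OF W] v1]) (use w in simp)
  have Epl: "(\<lambda>k. Ep ob (V k) (W k)) \<longlonglongrightarrow> Ep ob v w"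
    by (rule Ep_tendsto[OF ob V W v1]) (use w in simp)
  have e1: "Ep ob v (- w) = p \<or> Ep ob v (- w) = q" by (rule lim_in2[OF Em P Q]) (use h in blast)
  have e2: "Ep ob v w = p \<or> Ep ob v w = q" by (rule lim_in2[OF Epl P Q]) (use h in blast)
  have ne: "Ep ob v (- w) \<noteq> Ep ob v w" unfolding Ep_def by (rule mob_neq[OF b w])
  have pq: "p \<noteq> q" using e1 e2 ne by auto
  have ms: "(p, q) \<in> msupp L"
    by (rule closed_sequentially[OF msupp_closed, of "\<lambda>k. (P k, Q k)"]) (use h tendsto_Pair[OF P Q] in auto)
  have pp: "(p, q) \<in> pos_pairs" by (rule pos_pairs_limit[OF _ P Q pq]) (use h in blast)
  show "range (\<lambda>t. mob (- mob (- ob) v) (of_real (th t) * w)) \<in> leaves L"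
    by (rule leaf_from_limit[OF ms pp b w]) (use e1 e2 in \<open>simp_all add: Ep_def\<close>)
qed


definition good8 :: "complex \<Rightarrow> real \<Rightarrow> (complex \<times> complex) measure \<Rightarrow> (complex \<times> complex) measure \<Rightarrow> real \<Rightarrow>
   complex \<Rightarrow> complex \<Rightarrow> complex \<Rightarrow> complex \<Rightarrow> complex \<Rightarrow> complex \<Rightarrow> complex \<Rightarrow> complex \<Rightarrow> bool" where
  "good8 ob R Lm Lp e vm wm pm qm vp wp pp qp \<longleftrightarrow>
    cmod vm = R \<and> cmod wm = 1 \<and> (pm, qm) \<in> msupp Lm \<and> (pm, qm) \<in> pos_pairs \<and>
    (Ep ob vm (- wm) = pm \<or> Ep ob vm (- wm) = qm) \<and> (Ep ob vm wm = pm \<or> Ep ob vm wm = qm) \<and>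
    cmod vp = R \<and> cmod wp = 1 \<and> (pp, qp) \<in> msupp Lp \<and> (pp, qp) \<in> pos_pairs \<and>
    (Ep ob vp (- wp) = pp \<or> Ep ob vp (- wp) = qp) \<and> (Ep ob vp wp = pp \<or> Ep ob vp wp = qp) \<and>
    (cmod (mob ob (Ep ob vm (- wm)) - mob ob (Ep ob vp (- wp))))\<^sup>2 < 2 - 2 * cos e \<and>
    (cmod (vm - vp))\<^sup>2 < R\<^sup>2 * (2 - 2 * cos e)"

abbreviation good where
  "good ob R Lm Lp e X \<equiv> good8 ob R Lm Lp e (fst X) (fst (snd X)) (fst (snd (snd X)))
     (fst (snd (snd (snd X)))) (fst (snd (snd (snd (snd X))))) (fst (snd (snd (snd (snd (snd X))))))
     (fst (snd (snd (snd (snd (snd (snd X))))))) (snd (snd (snd (snd (snd (snd (snd X)))))))"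

lemma good_exists:
  assumes ob: "cmod ob < 1" and r: "r > 0" and e: "e \<le> pi"
    and gm: "geodesic_line \<gamma>m" and lm: "range \<gamma>m \<in> leaves Lm"
    and gp: "geodesic_line \<gamma>p" and lp: "range \<gamma>p \<in> leaves Lp"
    and am: "(\<gamma>m \<longlongrightarrow> am) at_bot" and ap: "(\<gamma>p \<longlongrightarrow> ap) at_bot"
    and fm: "first_hit ob r \<gamma>m tm" and fp: "first_hit ob r \<gamma>p tp"
    and va: "visual_dist ob am ap < e" and vb: "visual_dist ob (\<gamma>m tm) (\<gamma>p tp) < e"
  shows "\<exists>X. good ob (th r) Lm Lp e X"
proof -
  obtain vm wm pm qm vp wp pp qp where h:
    "good8 ob (th r) Lm Lp e vm wm pm qm vp wp pp qp"
    using bad_to_good[OF ob r e gm lm gp lp am ap fm fp va vb] unfolding good8_def by blast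
  show ?thesis by (rule exI[of _ "(vm, wm, pm, qm, vp, wp, pp, qp)"]) (use h in simp)
qed

theorem corollary3p6:
  fixes Lm Lp :: "(complex \<times> complex) measure" and ob :: complex
  assumes "measured_lamination Lm" and "measured_lamination Lp"
    and "bounded_lam Lm" and "bounded_lam Lp"
    and "strongly_fill Lm Lp"
    and "ob \<in> hdisk"
  shows "\<forall>n::nat. n > 0 \<longrightarrow> (\<exists>\<epsilon>>0. \<forall>\<gamma>m \<gamma>p am ap tm tp.
      geodesic_line \<gamma>m \<and> range \<gamma>m \<in> leaves Lm \<and>
      geodesic_line \<gamma>p \<and> range \<gamma>p \<in> leaves Lp \<and>
      (\<gamma>m \<longlongrightarrow> am) at_bot \<and> (\<gamma>p \<longlongrightarrow> ap) at_bot \<and>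
      first_hit ob (real n) \<gamma>m tm \<and> first_hit ob (real n) \<gamma>p tp \<longrightarrow>
      visual_dist ob am ap \<ge> \<epsilon> \<or> visual_dist ob (\<gamma>m tm) (\<gamma>p tp) \<ge> \<epsilon>)"
proof (intro allI impI)
  fix n :: nat assume n: "n > 0"
  have ob: "cmod ob < 1" using assms(6) unfolding hdisk_def by simp
  have r: "real n > 0" using n by simp
  let ?R = "th (real n)"
  define e where "e = (\<lambda>k::nat. inverse (real (Suc k)))"
  have e0: "\<And>k. e k > 0" unfolding e_def by simp
  have epi: "\<And>k. e k \<le> pi"
  proof -
    fix k have "e k \<le> 1" unfolding e_def by (simp add: inverse_le_1_iff)
    then show "e k \<le> pi" using pi_ge_two by linarith
  qed
  show "\<exists>\<epsilon>>0. \<forall>\<gamma>m \<gamma>p am ap tm tp.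
      geodesic_line \<gamma>m \<and> range \<gamma>m \<in> leaves Lm \<and>
      geodesic_line \<gamma>p \<and> range \<gamma>p \<in> leaves Lp \<and>
      (\<gamma>m \<longlongrightarrow> am) at_bot \<and> (\<gamma>p \<longlongrightarrow> ap) at_bot \<and>
      first_hit ob (real n) \<gamma>m tm \<and> first_hit ob (real n) \<gamma>p tp \<longrightarrow>
      visual_dist ob am ap \<ge> \<epsilon> \<or> visual_dist ob (\<gamma>m tm) (\<gamma>p tp) \<ge> \<epsilon>"
  proof (rule ccontr)
    assume neg: "\<not> (\<exists>\<epsilon>>0. \<forall>\<gamma>m \<gamma>p am ap tm tp.
      geodesic_line \<gamma>m \<and> range \<gamma>m \<in> leaves Lm \<and>
      geodesic_line \<gamma>p \<and> range \<gamma>p \<in> leaves Lp \<and>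
      (\<gamma>m \<longlongrightarrow> am) at_bot \<and> (\<gamma>p \<longlongrightarrow> ap) at_bot \<and>
      first_hit ob (real n) \<gamma>m tm \<and> first_hit ob (real n) \<gamma>p tp \<longrightarrow>
      visual_dist ob am ap \<ge> \<epsilon> \<or> visual_dist ob (\<gamma>m tm) (\<gamma>p tp) \<ge> \<epsilon>)"
    have "\<forall>k. \<exists>X. good ob ?R Lm Lp (e k) X"
    proof
      fix k
      have "\<not> (\<forall>\<gamma>m \<gamma>p am ap tm tp.
        geodesic_line \<gamma>m \<and> range \<gamma>m \<in> leaves Lm \<and>
        geodesic_line \<gamma>p \<and> range \<gamma>p \<in> leaves Lp \<and>
        (\<gamma>m \<longlongrightarrow> am) at_bot \<and> (\<gamma>p \<longlongrightarrow> ap) at_bot \<and>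
        first_hit ob (real n) \<gamma>m tm \<and> first_hit ob (real n) \<gamma>p tp \<longrightarrow>
        visual_dist ob am ap \<ge> e k \<or> visual_dist ob (\<gamma>m tm) (\<gamma>p tp) \<ge> e k)"
        using neg e0[of k] by blast
      then obtain \<gamma>m \<gamma>p am ap tm tp where H:
        "geodesic_line \<gamma>m" "range \<gamma>m \<in> leaves Lm"
        "geodesic_line \<gamma>p" "range \<gamma>p \<in> leaves Lp"
        "(\<gamma>m \<longlongrightarrow> am) at_bot" "(\<gamma>p \<longlongrightarrow> ap) at_bot"
        "first_hit ob (real n) \<gamma>m tm" "first_hit ob (real n) \<gamma>p tp"
        "\<not> visual_dist ob am ap \<ge> e k" "\<not> visual_dist ob (\<gamma>m tm) (\<gamma>p tp) \<ge> e k"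
        by blast
      show "\<exists>X. good ob ?R Lm Lp (e k) X"
        by (rule good_exists[OF ob r epi[of k] H(1-8)]) (use H(9,10) in auto)
    qed
    then obtain F where F: "\<And>k. good ob ?R Lm Lp (e k) (F k)" by metis
    define VM where "VM = (\<lambda>k. fst (F k))"
    define WM where "WM = (\<lambda>k. fst (snd (F k)))"
    define PM where "PM = (\<lambda>k. fst (snd (snd (F k))))"
    define QM where "QM = (\<lambda>k. fst (snd (snd (snd (F k)))))"
    define VP where "VP = (\<lambda>k. fst (snd (snd (snd (snd (F k))))))"
    define WP where "WP = (\<lambda>k. fst (snd (snd (snd (snd (snd (F k)))))))"
    define PP where "PP = (\<lambda>k. fst (snd (snd (snd (snd (snd (snd (F k))))))))"
    define QP where "QP = (\<lambda>k. snd (snd (snd (snd (snd (snd (snd (F k))))))))"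
    have G: "\<And>k. good8 ob ?R Lm Lp (e k) (VM k) (WM k) (PM k) (QM k) (VP k) (WP k) (PP k) (QP k)"
      using F unfolding VM_def WM_def PM_def QM_def VP_def WP_def PP_def QP_def .
    let ?S1 = "sphere (0::complex) 1" and ?SR = "sphere (0::complex) ?R"
    define K where "K = ?SR \<times> ?S1 \<times> ?S1 \<times> ?S1 \<times> ?SR \<times> ?S1 \<times> ?S1 \<times> ?S1"
    have cK: "compact K" unfolding K_def by (intro compact_Times compact_sphere)
    have FK: "\<forall>k. F k \<in> K"
    proof
      fix k
      have "good8 ob ?R Lm Lp (e k) (VM k) (WM k) (PM k) (QM k) (VP k) (WP k) (PP k) (QP k)" by (rule G)
      then show "F k \<in> K" unfolding K_def good8_def pos_pairs_def
        VM_def WM_def PM_def QM_def VP_def WP_def PP_def QP_def by (simp add: mem_Times_iff case_prod_unfold)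
    qed
    obtain l \<sigma> where l: "l \<in> K" and \<sigma>: "strict_mono (\<sigma> :: nat \<Rightarrow> nat)" and lim: "(F \<circ> \<sigma>) \<longlonglongrightarrow> l"
      using seq_compactE[OF compact_imp_seq_compact[OF cK] FK] by blast
    have lim': "(\<lambda>k. F (\<sigma> k)) \<longlonglongrightarrow> l" using lim by (simp add: comp_def)
    define vm where "vm = fst l"
    define wm where "wm = fst (snd l)"
    define pm where "pm = fst (snd (snd l))"
    define qm where "qm = fst (snd (snd (snd l)))"
    define vp where "vp = fst (snd (snd (snd (snd l))))"
    define wp where "wp = fst (snd (snd (snd (snd (snd l)))))"
    define pp where "pp = fst (snd (snd (snd (snd (snd (snd l))))))"
    define qp where "qp = snd (snd (snd (snd (snd (snd (snd l))))))"
    have LVM: "(\<lambda>k. VM (\<sigma> k)) \<longlonglongrightarrow> vm" unfolding VM_def vm_def by (intro tendsto_intros lim')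
    have LWM: "(\<lambda>k. WM (\<sigma> k)) \<longlonglongrightarrow> wm" unfolding WM_def wm_def by (intro tendsto_intros lim')
    have LPM: "(\<lambda>k. PM (\<sigma> k)) \<longlonglongrightarrow> pm" unfolding PM_def pm_def by (intro tendsto_intros lim')
    have LQM: "(\<lambda>k. QM (\<sigma> k)) \<longlonglongrightarrow> qm" unfolding QM_def qm_def by (intro tendsto_intros lim')
    have LVP: "(\<lambda>k. VP (\<sigma> k)) \<longlonglongrightarrow> vp" unfolding VP_def vp_def by (intro tendsto_intros lim')
    have LWP: "(\<lambda>k. WP (\<sigma> k)) \<longlonglongrightarrow> wp" unfolding WP_def wp_def by (intro tendsto_intros lim')
    have LPP: "(\<lambda>k. PP (\<sigma> k)) \<longlonglongrightarrow> pp" unfolding PP_def pp_def by (intro tendsto_intros lim')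
    have LQP: "(\<lambda>k. QP (\<sigma> k)) \<longlonglongrightarrow> qp" unfolding QP_def qp_def by (intro tendsto_intros lim')
    have R1: "?R < 1" using th_bounds[of "real n"] by simp
    have R0: "?R > 0" using th_pos r by simp
    note sm = limit_side[OF ob R1 LVM LWM LPM LQM, of Lm]
    note sp = limit_side[OF ob R1 LVP LWP LPP LQP, of Lp]
    have hm: "cmod vm = ?R" "cmod wm = 1" "range (\<lambda>t. mob (- mob (- ob) vm) (of_real (th t) * wm)) \<in> leaves Lm"
      by (rule sm; use G in \<open>simp add: good8_def\<close>)+
    have hp: "cmod vp = ?R" "cmod wp = 1" "range (\<lambda>t. mob (- mob (- ob) vp) (of_real (th t) * wp)) \<in> leaves Lp"
      by (rule sp; use G in \<open>simp add: good8_def\<close>)+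
    have ct: "(\<lambda>k. 2 - 2 * cos (e k)) \<longlonglongrightarrow> 0"
    proof -
      have "e \<longlonglongrightarrow> 0" unfolding e_def by (rule LIMSEQ_inverse_real_of_nat)
      then have "(\<lambda>k. 2 - 2 * cos (e k)) \<longlonglongrightarrow> 2 - 2 * cos 0" by (intro tendsto_intros)
      then show ?thesis by simp
    qed
    have cts: "(\<lambda>k. 2 - 2 * cos (e (\<sigma> k))) \<longlonglongrightarrow> 0"
      using LIMSEQ_subseq_LIMSEQ[OF ct \<sigma>] by (simp add: comp_def)
    have vm1: "cmod vm < 1" and vp1: "cmod vp < 1" using hm(1) hp(1) R1 by auto
    have bm: "cmod (mob (- ob) vm) < 1" and bp: "cmod (mob (- ob) vp) < 1"
      using mob_in_disk[of "-ob"] ob vm1 vp1 by auto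
    have Em1: "cmod (Ep ob vm (- wm)) = 1" unfolding Ep_def using mob_on_circle[of "- mob (- ob) vm" "-wm"] bm hm(2) by simp
    have Ep1: "cmod (Ep ob vp (- wp)) = 1" unfolding Ep_def using mob_on_circle[of "- mob (- ob) vp" "-wp"] bp hp(2) by simp
    have LEm: "(\<lambda>k. Ep ob (VM (\<sigma> k)) (- WM (\<sigma> k))) \<longlonglongrightarrow> Ep ob vm (- wm)"
      by (rule Ep_tendsto[OF ob LVM tendsto_minus[OF LWM] vm1]) (use hm in simp)
    have LEp: "(\<lambda>k. Ep ob (VP (\<sigma> k)) (- WP (\<sigma> k))) \<longlonglongrightarrow> Ep ob vp (- wp)"
      by (rule Ep_tendsto[OF ob LVP tendsto_minus[OF LWP] vp1]) (use hp in simp)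
    have LmEm: "(\<lambda>k. mob ob (Ep ob (VM (\<sigma> k)) (- WM (\<sigma> k)))) \<longlonglongrightarrow> mob ob (Ep ob vm (- wm))"
      by (rule mob_tendsto[OF tendsto_const LEm ob]) (use Em1 in simp)
    have LmEp: "(\<lambda>k. mob ob (Ep ob (VP (\<sigma> k)) (- WP (\<sigma> k)))) \<longlonglongrightarrow> mob ob (Ep ob vp (- wp))"
      by (rule mob_tendsto[OF tendsto_const LEp ob]) (use Ep1 in simp)
    have D1: "(\<lambda>k. (cmod (mob ob (Ep ob (VM (\<sigma> k)) (- WM (\<sigma> k))) - mob ob (Ep ob (VP (\<sigma> k)) (- WP (\<sigma> k)))))\<^sup>2)
       \<longlonglongrightarrow> (cmod (mob ob (Ep ob vm (- wm)) - mob ob (Ep ob vp (- wp))))\<^sup>2"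
      by (intro tendsto_intros LmEm LmEp)
    have "(cmod (mob ob (Ep ob vm (- wm)) - mob ob (Ep ob vp (- wp))))\<^sup>2 \<le> 0"
    proof (rule LIMSEQ_le[OF D1 cts])
      show "\<exists>N. \<forall>k\<ge>N. (cmod (mob ob (Ep ob (VM (\<sigma> k)) (- WM (\<sigma> k))) - mob ob (Ep ob (VP (\<sigma> k)) (- WP (\<sigma> k)))))\<^sup>2
         \<le> 2 - 2 * cos (e (\<sigma> k))"
        using G unfolding good8_def by (auto intro!: less_imp_le)
    qed
    then have "mob ob (Ep ob vm (- wm)) = mob ob (Ep ob vp (- wp))" by simp
    then have "mob (- ob) (mob ob (Ep ob vm (- wm))) = mob (- ob) (mob ob (Ep ob vp (- wp)))" by simp
    then have EE: "Ep ob vm (- wm) = Ep ob vp (- wp)" using mob_inv[OF ob] Em1 Ep1 by simp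
    have D2: "(\<lambda>k. (cmod (VM (\<sigma> k) - VP (\<sigma> k)))\<^sup>2) \<longlonglongrightarrow> (cmod (vm - vp))\<^sup>2"
      by (intro tendsto_intros LVM LVP)
    have cts2: "(\<lambda>k. ?R\<^sup>2 * (2 - 2 * cos (e (\<sigma> k)))) \<longlonglongrightarrow> ?R\<^sup>2 * 0"
      by (intro tendsto_intros cts)
    have "(cmod (vm - vp))\<^sup>2 \<le> ?R\<^sup>2 * 0"
    proof (rule LIMSEQ_le[OF D2 cts2])
      show "\<exists>N. \<forall>k\<ge>N. (cmod (VM (\<sigma> k) - VP (\<sigma> k)))\<^sup>2 \<le> ?R\<^sup>2 * (2 - 2 * cos (e (\<sigma> k)))"
        using G unfolding good8_def by (auto intro!: less_imp_le)
    qed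
    then have vv: "vp = vm" by simp
    have "mob (mob (- ob) vm) (mob (- mob (- ob) vm) (- wm)) = mob (mob (- ob) vm) (mob (- mob (- ob) vm) (- wp))"
      using EE unfolding Ep_def vv by simp
    then have "- wm = - wp" using mob_inv'[OF bm, of "-wm"] mob_inv'[OF bm, of "-wp"] hm(2) hp(2) by simp
    then have ww: "wp = wm" by simp
    have b': "cmod (- mob (- ob) vm) < 1" using bm by simp
    have gg: "geodesic_line (\<lambda>t. mob (- mob (- ob) vm) (of_real (th t) * wm))"
      by (rule geodesic_line_mob[OF b' geodesic_line_std[OF hm(2)]])
    show False by (rule no_common_leaf[OF assms(1,2,5) gg hm(3)]) (use hp(3) vv ww in simp)
  qed
qed


end
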